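(* For every $n\in\mathbb N$, let $\Sigma_{n,n}$ be the $n\times n$ matrix and $\Sigma_{n,n+1}$ the $n\times(n+1)$ matrix whose $(i,j)$ entry is $1$ if $j\in\{i,i+1\}$ and $0$ otherwise. Then \[\|\Sigma_{n,n}\|_\bullet=\|\Sigma_{n,n+1}\|_\bullet=\frac{2}{n+1}\cot\Big(\frac{\pi}{2(n+1)}\Big).\]
   Context: Fix $\mathbb F\in\{\mathbb R,\mathbb C\}$. For an $m\times n$ matrix $A$ with entries in $\mathbb F$, the Schur norm is $\|A\|_\bullet=\sup\{\|A\bullet X\|: X\in M_{m,n}(\mathbb F),\ \|X\|\le1\}$, where $A\bullet X=[a_{ij}x_{ij}]$ is the entrywise product and $\|\cdot\|$ is the operator norm $\ell^2_n\to\ell^2_m$. *)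

theory Defs
  imports Complex_Main
begin

text \<open>Matrices of varying size are represented as functions nat \<Rightarrow> nat \<Rightarrow> 'a,
  together with explicit dimensions m (rows) and n (columns); indices are 0-based,
  only entries with i < m and j < n are relevant. Vectors in F^n are nat \<Rightarrow> 'a
  (only the first n coordinates matter).\<close>

definition vec_norm :: "nat \<Rightarrow> (nat \<Rightarrow> 'a::real_normed_field) \<Rightarrow> real" where
  "vec_norm n x = sqrt (\<Sum>j<n. (norm (x j))\<^sup>2)"

definition mat_apply :: "nat \<Rightarrow> (nat \<Rightarrow> nat \<Rightarrow> 'a::real_normed_field) \<Rightarrow> (nat \<Rightarrow> 'a) \<Rightarrow> (nat \<Rightarrow> 'a)" where
  "mat_apply n A x = (\<lambda>i. \<Sum>j<n. A i j * x j)"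

definition op_norm :: "nat \<Rightarrow> nat \<Rightarrow> (nat \<Rightarrow> nat \<Rightarrow> 'a::real_normed_field) \<Rightarrow> real" where
  "op_norm m n A = Sup {vec_norm m (mat_apply n A x) | x. vec_norm n x \<le> 1}"

definition schur_prod :: "(nat \<Rightarrow> nat \<Rightarrow> 'a::real_normed_field) \<Rightarrow> (nat \<Rightarrow> nat \<Rightarrow> 'a) \<Rightarrow> (nat \<Rightarrow> nat \<Rightarrow> 'a)" where
  "schur_prod A X = (\<lambda>i j. A i j * X i j)"

definition schur_norm :: "nat \<Rightarrow> nat \<Rightarrow> (nat \<Rightarrow> nat \<Rightarrow> 'a::real_normed_field) \<Rightarrow> real" where
  "schur_norm m n A = Sup {op_norm m n (schur_prod A X) | X. op_norm m n X \<le> 1}"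

text \<open>Sigma: entry (i,j) is 1 iff j \<in> {i, i+1} (0-based; same pattern as 1-based).\<close>
definition Sigma_mat :: "nat \<Rightarrow> nat \<Rightarrow> 'a::real_normed_field" where
  "Sigma_mat i j = (if j = i \<or> j = i + 1 then 1 else 0)"

end

theory Submission
  imports Defs "HOL-Analysis.L2_Norm"
begin


lemma vec_norm_L2: "vec_norm n x = L2_set (\<lambda>j. norm (x j)) {..<n}"
  unfolding vec_norm_def L2_set_def by simp

lemma vec_norm_nonneg: "0 \<le> vec_norm n x"
  unfolding vec_norm_def by (simp add: sum_nonneg)

lemma norm_le_vec_norm: "j < n \<Longrightarrow> norm (x j) \<le> vec_norm n x"
  unfolding vec_norm_L2 by (rule member_le_L2_set) auto

lemma vec_norm_le_sum: "vec_norm n x \<le> (\<Sum>j<n. norm (x j))"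
  unfolding vec_norm_L2 by (rule L2_set_le_sum) auto

lemma op_norm_set_bdd:
  "bdd_above {vec_norm m (mat_apply n A x) | x. vec_norm n x \<le> 1}"
proof (rule bdd_aboveI)
  fix r assume "r \<in> {vec_norm m (mat_apply n A x) | x. vec_norm n x \<le> 1}"
  then obtain x where r: "r = vec_norm m (mat_apply n A x)" and x: "vec_norm n x \<le> 1" by auto
  have "r \<le> (\<Sum>i<m. norm (mat_apply n A x i))" unfolding r by (rule vec_norm_le_sum)
  also have "\<dots> \<le> (\<Sum>i<m. \<Sum>j<n. norm (A i j))"
  proof (rule sum_mono)
    fix i assume "i \<in> {..<m}"
    have "norm (mat_apply n A x i) \<le> (\<Sum>j<n. norm (A i j * x j))"
      unfolding mat_apply_def by (rule norm_sum)
    also have "\<dots> \<le> (\<Sum>j<n. norm (A i j))"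
    proof (rule sum_mono)
      fix j assume "j \<in> {..<n}"
      then have "norm (x j) \<le> 1" using norm_le_vec_norm[of j n x] x by auto
      then show "norm (A i j * x j) \<le> norm (A i j)"
        by (simp add: norm_mult mult_left_le)
    qed
    finally show "norm (mat_apply n A x i) \<le> (\<Sum>j<n. norm (A i j))" .
  qed
  finally show "r \<le> (\<Sum>i<m. \<Sum>j<n. norm (A i j))" .
qed

lemma op_norm_set_ne: "{vec_norm m (mat_apply n A x) | x. vec_norm n x \<le> 1} \<noteq> {}"
proof -
  have "vec_norm n (\<lambda>_. 0) \<le> 1" by (simp add: vec_norm_def)
  then show ?thesis by blast
qed

lemma op_norm_ge: "vec_norm n x \<le> 1 \<Longrightarrow> vec_norm m (mat_apply n A x) \<le> op_norm m n A"
  unfolding op_norm_def by (rule cSup_upper) (auto intro: op_norm_set_bdd)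

lemma op_norm_le: "(\<And>x. vec_norm n x \<le> 1 \<Longrightarrow> vec_norm m (mat_apply n A x) \<le> K) \<Longrightarrow> op_norm m n A \<le> K"
  unfolding op_norm_def by (rule cSup_least[OF op_norm_set_ne]) auto

lemma op_norm_nonneg: "0 \<le> op_norm m n A"
proof -
  have "vec_norm n (\<lambda>_. 0) \<le> 1" by (simp add: vec_norm_def)
  from op_norm_ge[OF this, of m A] show ?thesis using vec_norm_nonneg[of m] by (meson order_trans)
qed

lemma vec_norm_scale: "vec_norm n (\<lambda>j. x j * of_real c) = \<bar>c\<bar> * vec_norm n x"
  unfolding vec_norm_L2 by (simp add: norm_mult L2_set_right_distrib mult.commute)

lemma mat_apply_scale: "mat_apply n A (\<lambda>j. x j * of_real c) i = mat_apply n A x i * of_real c"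
  unfolding mat_apply_def by (simp add: sum_distrib_right mult.assoc)

lemma vec_norm_eq_0: "vec_norm n x = 0 \<Longrightarrow> j < n \<Longrightarrow> x j = 0"
  using norm_le_vec_norm[of j n x] by simp

lemma op_norm_bound: "vec_norm m (mat_apply n A x) \<le> op_norm m n A * vec_norm n x"
proof (cases "vec_norm n x = 0")
  case True
  then have "mat_apply n A x i = 0" for i unfolding mat_apply_def
    by (intro sum.neutral) (auto simp: vec_norm_eq_0)
  then show ?thesis using True by (simp add: vec_norm_def)
next
  case False
  define r where "r = vec_norm n x"
  have r: "r > 0" using False vec_norm_nonneg[of n x] unfolding r_def by linarith
  define y where "y = (\<lambda>j. x j * of_real (1/r))"
  have "vec_norm n y = 1" unfolding y_def vec_norm_scale using r r_def by simp
  then have "vec_norm m (mat_apply n A y) \<le> op_norm m n A" by (intro op_norm_ge) simp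
  moreover have "mat_apply n A y = (\<lambda>i. mat_apply n A x i * of_real (1/r))"
    unfolding y_def using mat_apply_scale by blast
  ultimately have "vec_norm m (mat_apply n A x) / r \<le> op_norm m n A"
    using vec_norm_scale[of m "mat_apply n A x" "1/r"] r by simp
  then show ?thesis using r unfolding r_def by (simp add: divide_le_eq mult.commute)
qed

lemma schur_norm_le:
  assumes "\<And>X. op_norm m n X \<le> 1 \<Longrightarrow> op_norm m n (schur_prod A X) \<le> K"
  shows "schur_norm m n A \<le> K"
proof -
  have "op_norm m n (\<lambda>i j. 0) \<le> 1" by (rule op_norm_le) (simp add: mat_apply_def vec_norm_def)
  then have ne: "{op_norm m n (schur_prod A X) | X. op_norm m n X \<le> 1} \<noteq> {}" by blast
  show ?thesis unfolding schur_norm_def by (rule cSup_least[OF ne]) (use assms in auto)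
qed

lemma schur_norm_ge:
  assumes "\<And>X. op_norm m n X \<le> 1 \<Longrightarrow> op_norm m n (schur_prod A X) \<le> K"
    and "op_norm m n X \<le> 1"
  shows "op_norm m n (schur_prod A X) \<le> schur_norm m n A"
  unfolding schur_norm_def
  by (rule cSup_upper) (use assms in \<open>auto intro!: bdd_aboveI\<close>)


lemma L2_set_sq: "(L2_set f A)\<^sup>2 = (\<Sum>i\<in>A. (f i)\<^sup>2)"
  unfolding L2_set_def by (simp add: sum_nonneg)

lemma vec_norm_sq: "(vec_norm n x)\<^sup>2 = (\<Sum>j<n. (norm (x j))\<^sup>2)"
  unfolding vec_norm_def by (simp add: sum_nonneg)

lemma schur_factor_bound:
  fixes A X :: "nat \<Rightarrow> nat \<Rightarrow> 'a::real_normed_field" and y :: "nat \<Rightarrow> 'a"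
    and a b :: "'p \<Rightarrow> nat \<Rightarrow> real" and P :: "'p set"
  assumes P: "finite P"
    and fac: "\<And>i j. i < m \<Longrightarrow> j < n \<Longrightarrow> A i j = of_real (\<Sum>p\<in>P. a p i * b p j)"
    and ra: "\<And>i. i < m \<Longrightarrow> (\<Sum>p\<in>P. (a p i)\<^sup>2) \<le> \<alpha>"
    and rb: "\<And>j. j < n \<Longrightarrow> (\<Sum>p\<in>P. (b p j)\<^sup>2) \<le> \<beta>"
    and a0: "0 \<le> \<alpha>" and b0: "0 \<le> \<beta>"
  shows "vec_norm m (mat_apply n (schur_prod A X) y) \<le> sqrt \<alpha> * sqrt \<beta> * op_norm m n X * vec_norm n y"
proof -
  define w where "w = mat_apply n (schur_prod A X) y"
  define z where "z = (\<lambda>p j. of_real (b p j) * y j)"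
  define Onorm where "Onorm = op_norm m n X"
  have Onorm0: "0 \<le> Onorm" unfolding Onorm_def by (rule op_norm_nonneg)
  have wi: "w i = (\<Sum>p\<in>P. of_real (a p i) * mat_apply n X (z p) i)" if "i < m" for i
  proof -
    have "w i = (\<Sum>j<n. (\<Sum>p\<in>P. of_real (a p i) * (X i j * (of_real (b p j) * y j))))"
      unfolding w_def mat_apply_def schur_prod_def
      by (intro sum.cong refl) (simp add: fac that sum_distrib_left sum_distrib_right mult_ac)
    also have "\<dots> = (\<Sum>p\<in>P. of_real (a p i) * mat_apply n X (z p) i)"
      unfolding mat_apply_def z_def by (subst sum.swap) (simp add: sum_distrib_left)
    finally show ?thesis .
  qed
  define F where "F = (\<lambda>p. L2_set (\<lambda>i. a p i * norm (w i)) {..<m})"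
  define G where "G = (\<lambda>p. L2_set (\<lambda>j. \<bar>b p j\<bar> * norm (y j)) {..<n})"
  have Fnn: "0 \<le> F p" for p unfolding F_def by simp
  have Gnn: "0 \<le> G p" for p unfolding G_def by simp
  have zn: "vec_norm n (z p) = G p" for p
    unfolding vec_norm_L2 G_def z_def by (intro L2_set_cong_simp) (auto simp: norm_mult)
  have "(vec_norm m w)\<^sup>2 = (\<Sum>i<m. norm (w i) * norm (w i))"
    unfolding vec_norm_sq by (simp add: power2_eq_square)
  also have "\<dots> \<le> (\<Sum>i<m. norm (w i) * (\<Sum>p\<in>P. \<bar>a p i\<bar> * norm (mat_apply n X (z p) i)))"
  proof (rule sum_mono)
    fix i assume i: "i \<in> {..<m}"
    have "norm (w i) \<le> (\<Sum>p\<in>P. norm (of_real (a p i) * mat_apply n X (z p) i))"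
      using wi i by (simp add: norm_sum)
    also have "\<dots> = (\<Sum>p\<in>P. \<bar>a p i\<bar> * norm (mat_apply n X (z p) i))"
      by (simp add: norm_mult)
    finally show "norm (w i) * norm (w i) \<le> norm (w i) * (\<Sum>p\<in>P. \<bar>a p i\<bar> * norm (mat_apply n X (z p) i))"
      by (simp add: mult_left_mono)
  qed
  also have "\<dots> = (\<Sum>p\<in>P. \<Sum>i<m. \<bar>a p i * norm (w i)\<bar> * \<bar>norm (mat_apply n X (z p) i)\<bar>)"
    by (subst sum.swap) (simp add: sum_distrib_left abs_mult mult_ac)
  also have "\<dots> \<le> (\<Sum>p\<in>P. F p * vec_norm m (mat_apply n X (z p)))"
    unfolding F_def vec_norm_L2 by (intro sum_mono L2_set_mult_ineq)
  also have "\<dots> \<le> (\<Sum>p\<in>P. F p * (Onorm * G p))"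
    by (intro sum_mono mult_left_mono Fnn) (use op_norm_bound zn Onorm_def in metis)
  also have "\<dots> = Onorm * (\<Sum>p\<in>P. \<bar>F p\<bar> * \<bar>G p\<bar>)"
    using Fnn Gnn by (simp add: sum_distrib_left mult_ac)
  also have "\<dots> \<le> Onorm * (L2_set F P * L2_set G P)"
    by (intro mult_left_mono Onorm0 L2_set_mult_ineq)
  finally have main: "(vec_norm m w)\<^sup>2 \<le> Onorm * (L2_set F P * L2_set G P)" .
  have "(L2_set F P)\<^sup>2 = (\<Sum>i<m. (norm (w i))\<^sup>2 * (\<Sum>p\<in>P. (a p i)\<^sup>2))"
    unfolding L2_set_sq F_def by (subst sum.swap) (simp add: sum_distrib_left power_mult_distrib mult_ac)
  also have "\<dots> \<le> (\<Sum>i<m. (norm (w i))\<^sup>2 * \<alpha>)"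
    by (intro sum_mono mult_left_mono) (auto simp: ra)
  also have "\<dots> = \<alpha> * (vec_norm m w)\<^sup>2"
    unfolding vec_norm_sq by (simp add: sum_distrib_left mult_ac)
  finally have F2: "(L2_set F P)\<^sup>2 \<le> \<alpha> * (vec_norm m w)\<^sup>2" .
  have "(L2_set G P)\<^sup>2 = (\<Sum>j<n. (norm (y j))\<^sup>2 * (\<Sum>p\<in>P. (b p j)\<^sup>2))"
    unfolding L2_set_sq G_def by (subst sum.swap) (simp add: sum_distrib_left power_mult_distrib power2_abs mult_ac)
  also have "\<dots> \<le> (\<Sum>j<n. (norm (y j))\<^sup>2 * \<beta>)"
    by (intro sum_mono mult_left_mono) (auto simp: rb)
  also have "\<dots> = \<beta> * (vec_norm n y)\<^sup>2"
    unfolding vec_norm_sq by (simp add: sum_distrib_left mult_ac)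
  finally have G2: "(L2_set G P)\<^sup>2 \<le> \<beta> * (vec_norm n y)\<^sup>2" .
  have F1: "L2_set F P \<le> sqrt \<alpha> * vec_norm m w"
    using real_sqrt_le_mono[OF F2] vec_norm_nonneg[of m w] by (simp add: real_sqrt_mult)
  have G1: "L2_set G P \<le> sqrt \<beta> * vec_norm n y"
    using real_sqrt_le_mono[OF G2] vec_norm_nonneg[of n y] by (simp add: real_sqrt_mult)
  have "(vec_norm m w)\<^sup>2 \<le> Onorm * ((sqrt \<alpha> * vec_norm m w) * (sqrt \<beta> * vec_norm n y))"
    using main F1 G1 Onorm0 by (meson L2_set_nonneg mult_left_mono mult_mono order_trans)
  then have "vec_norm m w * vec_norm m w \<le> vec_norm m w * (sqrt \<alpha> * sqrt \<beta> * Onorm * vec_norm n y)"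
    by (simp add: power2_eq_square mult_ac)
  then have "vec_norm m w \<le> sqrt \<alpha> * sqrt \<beta> * Onorm * vec_norm n y \<or> vec_norm m w = 0"
    using vec_norm_nonneg[of m w] by (metis mult_le_cancel_left_pos order_le_less)
  moreover have "0 \<le> sqrt \<alpha> * sqrt \<beta> * Onorm * vec_norm n y"
    using a0 b0 Onorm0 vec_norm_nonneg[of n y] by simp
  ultimately show ?thesis unfolding w_def Onorm_def by auto
qed


lemma sum_cos_tel:
  "2 * sin t * (\<Sum>p<N. cos (2 * real p * t + f)) = sin ((2 * real N - 1) * t + f) - sin (f - t)"
proof (induction N)
  case 0 then show ?case by (simp add: algebra_simps)
next
  case (Suc N)
  have e0: "2 * sin t * cos x = sin (x + t) - sin (x - t)" for x by (simp add: sin_add sin_diff)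
  have "2 * sin t * (\<Sum>p<Suc N. cos (2 * real p * t + f))
      = 2 * sin t * (\<Sum>p<N. cos (2 * real p * t + f)) + 2 * sin t * cos (2 * real N * t + f)"
    by (simp add: distrib_left)
  also have "\<dots> = (sin ((2 * real N - 1) * t + f) - sin (f - t))
       + (sin ((2 * real N * t + f) + t) - sin ((2 * real N * t + f) - t))"
    using Suc e0 by simp
  also have "(2 * real N * t + f) - t = (2 * real N - 1) * t + f" by (simp add: algebra_simps)
  also have "(2 * real N * t + f) + t = (2 * real (Suc N) - 1) * t + f" by (simp add: algebra_simps)
  finally show ?case by simp
qed

lemma sum_sin_tel:
  "2 * sin t * (\<Sum>p<N. sin (2 * real p * t + f)) = cos (f - t) - cos ((2 * real N - 1) * t + f)"
proof (induction N)
  case 0 then show ?case by (simp add: algebra_simps)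
next
  case (Suc N)
  have e0: "2 * sin t * sin x = cos (x - t) - cos (x + t)" for x by (simp add: cos_add cos_diff)
  have "2 * sin t * (\<Sum>p<Suc N. sin (2 * real p * t + f))
      = 2 * sin t * (\<Sum>p<N. sin (2 * real p * t + f)) + 2 * sin t * sin (2 * real N * t + f)"
    by (simp add: distrib_left)
  also have "\<dots> = (cos (f - t) - cos ((2 * real N - 1) * t + f))
       + (cos ((2 * real N * t + f) - t) - cos ((2 * real N * t + f) + t))"
    using Suc e0 by simp
  also have "(2 * real N * t + f) - t = (2 * real N - 1) * t + f" by (simp add: algebra_simps)
  also have "(2 * real N * t + f) + t = (2 * real (Suc N) - 1) * t + f" by (simp add: algebra_simps)
  finally show ?case by simp
qed

lemma sin_int_pi_div_ne0:
  assumes "N > 0" "s \<noteq> 0" "\<bar>s\<bar> < int N"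
  shows "sin (of_int s * pi / real N) \<noteq> 0"
proof
  assume "sin (of_int s * pi / real N) = 0"
  then obtain i :: int where i: "of_int s * pi / real N = of_int i * pi" by (auto simp: sin_zero_iff_int2)
  then have "real_of_int s = of_int i * real N" using assms(1) by (simp add: field_simps)
  then have "s = i * int N" by (metis of_int_eq_iff of_int_mult of_int_of_nat_eq)
  then show False using assms by (cases "i = 0") (auto simp: abs_mult)
qed

lemma cos_sum_int:
  assumes "N > 0" "\<bar>s\<bar> < int N"
  shows "(\<Sum>p<N. cos (2 * real p * (of_int s * pi / real N))) = (if s = 0 then real N else 0)"
proof (cases "s = 0")
  case True then show ?thesis by simp
next
  case False
  define t where "t = of_int s * pi / real N"
  have st: "sin t \<noteq> 0" unfolding t_def using sin_int_pi_div_ne0[OF assms(1) False assms(2)] .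
  have "2 * sin t * (\<Sum>p<N. cos (2 * real p * t + 0)) = sin ((2 * real N - 1) * t + 0) - sin (0 - t)"
    by (rule sum_cos_tel)
  also have "(2 * real N - 1) * t + 0 = 2 * pi * of_int s - t"
    unfolding t_def using assms(1) by (simp add: field_simps)
  also have "sin (2 * pi * of_int s - t) = - sin t"
    by (simp add: sin_diff sin_integer_2pi cos_integer_2pi)
  finally have "2 * sin t * (\<Sum>p<N. cos (2 * real p * t)) = 0" by simp
  then show ?thesis using st False unfolding t_def by simp
qed

lemma sin_sum_cot:
  assumes "N > 0"
  shows "(\<Sum>p<N. sin (real p * (pi / real N))) = cot (pi / (2 * real N))"
proof -
  define t where "t = pi / (2 * real N)"
  have t0: "0 < t" "t < pi" using assms unfolding t_def by (auto simp: field_simps)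
  have st: "sin t > 0" using t0 sin_gt_zero by blast
  have "2 * sin t * (\<Sum>p<N. sin (2 * real p * t + 0)) = cos (0 - t) - cos ((2 * real N - 1) * t + 0)"
    by (rule sum_sin_tel)
  also have "(2 * real N - 1) * t + 0 = pi - t" unfolding t_def using assms by (simp add: field_simps)
  finally have "2 * sin t * (\<Sum>p<N. sin (2 * real p * t)) = 2 * cos t" by simp
  moreover have "2 * real p * t = real p * (pi / real N)" for p unfolding t_def using assms by simp
  ultimately have "sin t * (\<Sum>p<N. sin (real p * (pi / real N))) = cos t" by simp
  then show ?thesis using st unfolding cot_def t_def[symmetric] by (simp add: field_simps)
qed


definition psi :: "nat \<Rightarrow> real" where "psi N = pi / real N"
definition sg :: "nat \<Rightarrow> nat \<Rightarrow> real" where "sg N p = sqrt (2 * sin (real p * psi N) / real N)"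
definition fa :: "nat \<Rightarrow> nat \<times> bool \<Rightarrow> nat \<Rightarrow> real" where
  "fa N q i = (case q of (p, True) \<Rightarrow> sg N p * (-1)^i * sin ((2 * real i + 1) * real p * psi N)
                        | (p, False) \<Rightarrow> - (sg N p * (-1)^i * cos ((2 * real i + 1) * real p * psi N)))"
definition fb :: "nat \<Rightarrow> nat \<times> bool \<Rightarrow> nat \<Rightarrow> real" where
  "fb N q j = (case q of (p, True) \<Rightarrow> sg N p * (-1)^j * cos (2 * real j * real p * psi N)
                        | (p, False) \<Rightarrow> sg N p * (-1)^j * sin (2 * real j * real p * psi N))"

lemma sum_prod_bool: "(\<Sum>q\<in>{..<N} \<times> (UNIV::bool set). f q) = (\<Sum>p<N. f (p, True) + f (p, False))"
  by (simp add: sum.cartesian_product' UNIV_bool add.commute)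

lemma neg1_pow_sq [simp]: "((-1::real)^k)\<^sup>2 = 1"
  by (induct k) (auto simp: power2_eq_square)

lemma sin_p_nonneg: "p < N \<Longrightarrow> 0 \<le> sin (real p * psi N)"
  unfolding psi_def by (intro sin_ge_zero) (auto simp: field_simps)

lemma sg_sq: "p < N \<Longrightarrow> (sg N p)\<^sup>2 = 2 * sin (real p * psi N) / real N"
  unfolding sg_def using sin_p_nonneg[of p N] by simp

definition cval :: "nat \<Rightarrow> real" where "cval N = 2 / real N * cot (pi / (2 * real N))"

lemma fa_sq: "(\<Sum>q\<in>{..<N} \<times> (UNIV::bool set). (fa N q i)\<^sup>2) = cval N"
proof -
  have "(\<Sum>q\<in>{..<N} \<times> (UNIV::bool set). (fa N q i)\<^sup>2) = (\<Sum>p<N. (sg N p)\<^sup>2)"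
    unfolding sum_prod_bool fa_def
    by (intro sum.cong refl) (simp add: power_mult_distrib algebra_simps flip: distrib_left)
  also have "\<dots> = (\<Sum>p<N. 2 / real N * sin (real p * psi N))"
    by (intro sum.cong refl) (simp add: sg_sq)
  also have "\<dots> = cval N"
  proof (cases "N = 0")
    case True then show ?thesis by (simp add: cval_def)
  next
    case False
    have "(\<Sum>p<N. 2 / real N * sin (real p * psi N)) = 2 / real N * (\<Sum>p<N. sin (real p * (pi / real N)))"
      unfolding psi_def by (rule sum_distrib_left[symmetric])
    then show ?thesis unfolding cval_def using sin_sum_cot[of N] False by simp
  qed
  finally show ?thesis .
qed

lemma fb_sq: "(\<Sum>q\<in>{..<N} \<times> (UNIV::bool set). (fb N q j)\<^sup>2) = cval N"
proof -
  have "(\<Sum>q\<in>{..<N} \<times> (UNIV::bool set). (fb N q j)\<^sup>2) = (\<Sum>p<N. (sg N p)\<^sup>2)"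
    unfolding sum_prod_bool fb_def
    by (intro sum.cong refl) (simp add: power_mult_distrib algebra_simps flip: distrib_left)
  also have "\<dots> = (\<Sum>p<N. 2 / real N * sin (real p * psi N))"
    by (intro sum.cong refl) (simp add: sg_sq)
  also have "\<dots> = cval N"
  proof (cases "N = 0")
    case True then show ?thesis by (simp add: cval_def)
  next
    case False
    have "(\<Sum>p<N. 2 / real N * sin (real p * psi N)) = 2 / real N * (\<Sum>p<N. sin (real p * (pi / real N)))"
      unfolding psi_def by (rule sum_distrib_left[symmetric])
    then show ?thesis unfolding cval_def using sin_sum_cot[of N] False by simp
  qed
  finally show ?thesis .
qed


lemma fab_term:
  assumes "p < N"
  shows "fa N (p,True) i * fb N (p,True) j + fa N (p,False) i * fb N (p,False) j
    = (-1)^(i+j) / real N * (cos (2 * real p * (of_int (int j - int i) * pi / real N))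
                             - cos (2 * real p * (of_int (int i - int j + 1) * pi / real N)))"
proof -
  define A where "A = (2 * real i + 1) * real p * psi N"
  define B where "B = 2 * real j * real p * psi N"
  have "fa N (p,True) i * fb N (p,True) j + fa N (p,False) i * fb N (p,False) j
      = (sg N p)\<^sup>2 * (-1)^(i+j) * (sin A * cos B - cos A * sin B)"
    unfolding fa_def fb_def A_def B_def by (simp add: power2_eq_square power_add algebra_simps)
  also have "sin A * cos B - cos A * sin B = sin (A - B)" by (simp add: sin_diff)
  also have "(sg N p)\<^sup>2 = 2 * sin (real p * psi N) / real N" using sg_sq[OF assms] .
  also have "2 * sin (real p * psi N) / real N * (-1)^(i+j) * sin (A - B)
      = (-1)^(i+j) / real N * (2 * (sin (real p * psi N) * sin (A - B)))" by simp
  also have "2 * (sin (real p * psi N) * sin (A - B)) = cos (real p * psi N - (A - B)) - cos (real p * psi N + (A - B))"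
    by (simp add: sin_times_sin)
  also have "real p * psi N - (A - B) = 2 * real p * (of_int (int j - int i) * pi / real N)"
    unfolding A_def B_def psi_def by (simp add: algebra_simps add_divide_distrib diff_divide_distrib)
  also have "real p * psi N + (A - B) = 2 * real p * (of_int (int i - int j + 1) * pi / real N)"
    unfolding A_def B_def psi_def by (simp add: algebra_simps add_divide_distrib diff_divide_distrib)
  finally show ?thesis .
qed

lemma fab_sigma:
  assumes "i < n" "j < Suc n"
  shows "(\<Sum>q\<in>{..<Suc n} \<times> (UNIV::bool set). fa (Suc n) q i * fb (Suc n) q j) = (if j = i \<or> j = i + 1 then 1 else 0)"
proof -
  define N where "N = Suc n"
  define C where "C = (\<lambda>s::int. \<Sum>p<N. cos (2 * real p * (of_int s * pi / real N)))"
  have N0: "N > 0" unfolding N_def by simp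
  have "(\<Sum>q\<in>{..<N} \<times> (UNIV::bool set). fa N q i * fb N q j)
      = (\<Sum>p<N. (-1)^(i+j) / real N * (cos (2 * real p * (of_int (int j - int i) * pi / real N))
                             - cos (2 * real p * (of_int (int i - int j + 1) * pi / real N))))"
    unfolding sum_prod_bool by (intro sum.cong refl fab_term) simp
  also have "\<dots> = (-1)^(i+j) / real N * (C (int j - int i) - C (int i - int j + 1))"
    unfolding C_def by (simp only: sum_subtractf[symmetric] sum_distrib_left)
  finally have eq: "(\<Sum>q\<in>{..<N} \<times> (UNIV::bool set). fa N q i * fb N q j)
       = (-1)^(i+j) / real N * (C (int j - int i) - C (int i - int j + 1))" .
  have b1: "\<bar>int j - int i\<bar> < int N" using assms unfolding N_def by auto
  have b2: "\<bar>int i - int j + 1\<bar> < int N" using assms unfolding N_def by auto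
  have C1: "C (int j - int i) = (if int j - int i = 0 then real N else 0)"
    unfolding C_def by (rule cos_sum_int[OF N0 b1])
  have C2: "C (int i - int j + 1) = (if int i - int j + 1 = 0 then real N else 0)"
    unfolding C_def by (rule cos_sum_int[OF N0 b2])
  show ?thesis
  proof (cases "j = i")
    case True
    then show ?thesis using eq C1 C2 N0 unfolding N_def by (simp add: power_add[symmetric] flip: mult_2)
  next
    case ji: False
    show ?thesis
    proof (cases "j = i + 1")
      case True
      have s1: "(-1::real)^(i+j) = -1" using True by (simp add: power_add[symmetric] flip: mult_2)
      have "(-1)^(i+j) / real N * (C (int j - int i) - C (int i - int j + 1)) = 1"
        using True C1 C2 N0 s1 by simp
      then show ?thesis using eq True unfolding N_def by simp
    next
      case False
      then show ?thesis using ji eq C1 C2 N0 unfolding N_def by simp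
    qed
  qed
qed


lemma cval_nonneg: "0 \<le> cval N"
proof (cases "N = 0")
  case True then show ?thesis by (simp add: cval_def)
next
  case False
  have "0 < pi / (2 * real N)" "pi / (2 * real N) \<le> pi / 2" using False by (auto simp: field_simps)
  then have "0 \<le> cos (pi / (2 * real N))" "0 < sin (pi / (2 * real N))"
    by (auto intro!: cos_ge_zero sin_gt_zero simp: field_simps)
  then show ?thesis unfolding cval_def cot_def by simp
qed

lemma upper_bound:
  assumes "nc \<le> Suc n"
  shows "schur_norm n nc (Sigma_mat :: nat \<Rightarrow> nat \<Rightarrow> 'a::real_normed_field) \<le> cval (Suc n)"
proof (rule schur_norm_le)
  fix X :: "nat \<Rightarrow> nat \<Rightarrow> 'a" assume X: "op_norm n nc X \<le> 1"
  show "op_norm n nc (schur_prod Sigma_mat X) \<le> cval (Suc n)"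
  proof (rule op_norm_le)
    fix x :: "nat \<Rightarrow> 'a" assume x: "vec_norm nc x \<le> 1"
    have c0: "0 \<le> cval (Suc n)" by (rule cval_nonneg)
    have "vec_norm n (mat_apply nc (schur_prod Sigma_mat X) x)
        \<le> sqrt (cval (Suc n)) * sqrt (cval (Suc n)) * op_norm n nc X * vec_norm nc x"
    proof (rule schur_factor_bound[where P = "{..<Suc n} \<times> UNIV" and a = "fa (Suc n)" and b = "fb (Suc n)"])
      show "finite ({..<Suc n} \<times> (UNIV::bool set))" by simp
      fix i j assume "i < n" "j < nc"
      then show "Sigma_mat i j = of_real (\<Sum>p\<in>{..<Suc n} \<times> UNIV. fa (Suc n) p i * fb (Suc n) p j)"
        using assms by (simp add: fab_sigma Sigma_mat_def)
    next
      fix i show "(\<Sum>p\<in>{..<Suc n} \<times> UNIV. (fa (Suc n) p i)\<^sup>2) \<le> cval (Suc n)" by (simp add: fa_sq)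
    next
      fix j show "(\<Sum>p\<in>{..<Suc n} \<times> UNIV. (fb (Suc n) p j)\<^sup>2) \<le> cval (Suc n)" by (simp add: fb_sq)
    qed (use c0 in auto)
    also have "\<dots> \<le> cval (Suc n) * 1 * 1"
      using c0 X x op_norm_nonneg[of n nc X] vec_norm_nonneg[of nc x]
      by (intro mult_mono) auto
    finally show "vec_norm n (mat_apply nc (schur_prod Sigma_mat X) x) \<le> cval (Suc n)" by simp
  qed
qed


lemma cis_sum:
  assumes N: "N > 0" and m: "\<bar>m\<bar> < int N"
  shows "(\<Sum>k<N. cis (2 * real k * psi N * of_int m)) = (if m = 0 then of_nat N else 0)"
proof (cases "m = 0")
  case True then show ?thesis by simp
next
  case False
  define x where "x = cis (2 * psi N * of_int m)"
  have xk: "cis (2 * real k * psi N * of_int m) = x ^ k" for k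
    unfolding x_def DeMoivre by (simp add: mult_ac)
  have xN: "x ^ N = 1"
  proof -
    have "x ^ N = cis (2 * pi * of_int m)" unfolding x_def DeMoivre psi_def using N by (simp add: field_simps)
    also have "\<dots> = 1" by (rule cis_multiple_2pi) simp
    finally show ?thesis .
  qed
  have x1: "x \<noteq> 1"
  proof
    assume "x = 1"
    then have "cos (2 * psi N * of_int m) = 1" unfolding x_def by (metis cis.sel(1) one_complex.simps(1))
    then obtain i :: int where i: "2 * psi N * of_int m = of_int i * 2 * pi" by (auto simp: cos_one_2pi_int)
    then have "real_of_int m = of_int i * real N" using N unfolding psi_def by (simp add: field_simps)
    then have "m = i * int N" by (metis of_int_eq_iff of_int_mult of_int_of_nat_eq)
    then show False using m False by (cases "i = 0") (auto simp: abs_mult)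
  qed
  show ?thesis using False unfolding xk geometric_sum[OF x1] xN by simp
qed

lemma cis_sum_shift:
  assumes "N > 0" "\<bar>m\<bar> < int N"
  shows "(\<Sum>k<N. cis (2 * real k * psi N * of_int m + f)) = (if m = 0 then of_nat N * cis f else 0)"
proof -
  have "(\<Sum>k<N. cis (2 * real k * psi N * of_int m + f)) = (\<Sum>k<N. cis (2 * real k * psi N * of_int m)) * cis f"
    by (simp add: sum_distrib_right cis_mult)
  then show ?thesis using cis_sum[OF assms] by simp
qed


definition ww :: "nat \<Rightarrow> nat \<Rightarrow> real" where
  "ww N k = sin (real k * psi N) * sin ((real k + 1/2) * psi N)"
definition vv :: "nat \<Rightarrow> nat \<Rightarrow> real" where
  "vv N l = sin (real l * psi N) * sin ((real l - 1/2) * psi N)"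

lemma cis_cos: "cis t + cis (- t) = 2 * complex_of_real (cos t)"
  by (simp add: complex_eq_iff)

lemma ww_cis: "complex_of_real (ww N k) = (2 * cos (psi N / 2) - cis (2 * real k * psi N + psi N / 2) - cis (-(2 * real k * psi N + psi N / 2))) / 4"
proof -
  have "ww N k = (cos (psi N / 2) - cos (2 * real k * psi N + psi N / 2)) / 2"
    unfolding ww_def sin_times_sin by (simp add: algebra_simps)
  then show ?thesis unfolding cis_cnj[symmetric] by (simp add: complex_eq_iff)
qed

lemma vv_cis: "complex_of_real (vv N (Suc l)) = (2 * cos (psi N / 2) - cis (2 * real l * psi N + 3 * psi N / 2) - cis (-(2 * real l * psi N + 3 * psi N / 2))) / 4"
proof -
  have "vv N (Suc l) = (cos (psi N / 2) - cos (2 * real l * psi N + 3 * psi N / 2)) / 2"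
    unfolding vv_def sin_times_sin by (simp add: algebra_simps)
  then show ?thesis unfolding cis_cnj[symmetric] by (simp add: complex_eq_iff)
qed

definition SS :: "nat \<Rightarrow> int \<Rightarrow> real \<Rightarrow> complex" where
  "SS N m f = (\<Sum>k<N. cis (2 * real k * psi N * of_int m + f))"

lemma sum_split3:
  "(\<Sum>k<N. (c * A k - B k - C k) / 4) = (c * (\<Sum>k<N. A k) - (\<Sum>k<N. B k) - (\<Sum>k<N. C k)) / (4::complex)"
  by (simp only: sum_subtractf[symmetric] sum_divide_distrib sum_distrib_left)

lemma quad_lhs:
  "(\<Sum>k<N. complex_of_real (ww N k) * cis (2 * real k * psi N * of_int m))
    = (2 * cos (psi N / 2) * SS N m 0 - SS N (m + 1) (psi N / 2) - SS N (m - 1) (- (psi N / 2))) / 4"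
proof -
  have e: "complex_of_real (ww N k) * cis (2 * real k * psi N * of_int m)
     = (2 * cos (psi N / 2) * cis (2 * real k * psi N * of_int m + 0)
        - cis (2 * real k * psi N * of_int (m + 1) + psi N / 2)
        - cis (2 * real k * psi N * of_int (m - 1) + - (psi N / 2))) / 4" for k
    unfolding ww_cis by (simp add: cis_mult algebra_simps diff_divide_distrib)
  show ?thesis unfolding SS_def e sum_split3 ..
qed

lemma quad_rhs:
  "(\<Sum>l<N. complex_of_real (vv N (Suc l)) * cis ((2 * real (Suc l) - 1) * psi N * of_int m))
    = (2 * cos (psi N / 2) * SS N m (psi N * of_int m) - SS N (m + 1) (psi N * of_int m + 3 * psi N / 2)
       - SS N (m - 1) (psi N * of_int m - 3 * psi N / 2)) / 4"
proof -
  have e: "complex_of_real (vv N (Suc l)) * cis ((2 * real (Suc l) - 1) * psi N * of_int m)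
     = (2 * cos (psi N / 2) * cis (2 * real l * psi N * of_int m + psi N * of_int m)
        - cis (2 * real l * psi N * of_int (m + 1) + (psi N * of_int m + 3 * psi N / 2))
        - cis (2 * real l * psi N * of_int (m - 1) + (psi N * of_int m - 3 * psi N / 2))) / 4" for l
    unfolding vv_cis by (simp add: cis_mult algebra_simps diff_divide_distrib)
  show ?thesis unfolding SS_def e sum_split3 ..
qed

lemma SS_eval: "N > 0 \<Longrightarrow> \<bar>m\<bar> < int N \<Longrightarrow> SS N m f = (if m = 0 then of_nat N * cis f else 0)"
  unfolding SS_def by (rule cis_sum_shift)

lemma quadrature:
  assumes N: "N \<ge> 2" and m: "\<bar>m\<bar> \<le> int N - 2"
  shows "(\<Sum>k<N. complex_of_real (ww N k) * cis (2 * real k * psi N * of_int m))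
       = (\<Sum>l<N. complex_of_real (vv N (Suc l)) * cis ((2 * real (Suc l) - 1) * psi N * of_int m))"
proof -
  have N0: "N > 0" using N by simp
  have e0: "SS N m f = (if m = 0 then of_nat N * cis f else 0)" for f
    using m by (intro SS_eval N0) auto
  have e1: "SS N (m + 1) f = (if m = -1 then of_nat N * cis f else 0)" for f
    using m SS_eval[OF N0, of "m+1" f] by auto
  have e2: "SS N (m - 1) f = (if m = 1 then of_nat N * cis f else 0)" for f
    using m SS_eval[OF N0, of "m-1" f] by auto
  show ?thesis
  proof (cases "m = 0")
    case True then show ?thesis unfolding quad_lhs quad_rhs e0 e1 e2 by simp
  next
    case m0: False
    show ?thesis
    proof (cases "m = 1")
      case True
      have "psi N * of_int m - 3 * psi N / 2 = - (psi N / 2)" using True by simp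
      then show ?thesis using True unfolding quad_lhs quad_rhs e0 e1 e2 by simp
    next
      case m1: False
      show ?thesis
      proof (cases "m = -1")
        case True
        have "psi N * of_int m + 3 * psi N / 2 = psi N / 2" using True by simp
        then show ?thesis using True unfolding quad_lhs quad_rhs e0 e1 e2 by simp
      qed (use m0 m1 in \<open>unfold quad_lhs quad_rhs e0 e1 e2, simp\<close>)
    qed
  qed
qed


lemma cis_pow_cnj: "cis t ^ a * cnj (cis t) ^ b = cis (t * of_int (int a - int b))"
  by (simp add: DeMoivre cis_cnj cis_mult algebra_simps)

lemma sq_expand:
  "complex_of_real ((cmod (\<Sum>j\<in>J. c j * z ^ j))\<^sup>2) = (\<Sum>a\<in>J. \<Sum>b\<in>J. c a * cnj (c b) * (z ^ a * cnj z ^ b))"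
  unfolding complex_norm_square cnj_sum sum_product by (simp add: mult_ac)

lemma poly_quad:
  assumes N: "N \<ge> 2"
  shows "(\<Sum>k<N. ww N k * (cmod (\<Sum>j<N-1. c j * cis (2 * real k * psi N) ^ j))\<^sup>2)
       = (\<Sum>l<N. vv N (Suc l) * (cmod (\<Sum>j<N-1. c j * cis ((2 * real (Suc l) - 1) * psi N) ^ j))\<^sup>2)"
proof -
  have q: "(\<Sum>k<N. complex_of_real (ww N k) * cis (2 * real k * psi N * of_int (int a - int b)))
       = (\<Sum>l<N. complex_of_real (vv N (Suc l)) * cis ((2 * real (Suc l) - 1) * psi N * of_int (int a - int b)))"
    if "a < N - 1" "b < N - 1" for a b
    using that N by (intro quadrature) auto
  have "complex_of_real (\<Sum>k<N. ww N k * (cmod (\<Sum>j<N-1. c j * cis (2 * real k * psi N) ^ j))\<^sup>2)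
      = (\<Sum>k<N. complex_of_real (ww N k) * (\<Sum>a<N-1. \<Sum>b<N-1. c a * cnj (c b) * cis (2 * real k * psi N * of_int (int a - int b))))"
    by (simp only: of_real_sum of_real_mult sq_expand cis_pow_cnj)
  also have "\<dots> = (\<Sum>a<N-1. \<Sum>b<N-1. c a * cnj (c b) * (\<Sum>k<N. complex_of_real (ww N k) * cis (2 * real k * psi N * of_int (int a - int b))))"
    by (simp add: sum_distrib_left sum_distrib_right mult_ac sum.swap[of _ "{..<N}"])
  also have "\<dots> = (\<Sum>a<N-1. \<Sum>b<N-1. c a * cnj (c b) * (\<Sum>l<N. complex_of_real (vv N (Suc l)) * cis ((2 * real (Suc l) - 1) * psi N * of_int (int a - int b))))"
    apply (intro sum.cong refl)
    subgoal for a b using q[of a b] by simp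
    done
  also have "\<dots> = (\<Sum>l<N. complex_of_real (vv N (Suc l)) * (\<Sum>a<N-1. \<Sum>b<N-1. c a * cnj (c b) * cis ((2 * real (Suc l) - 1) * psi N * of_int (int a - int b))))"
    by (simp add: sum_distrib_left sum_distrib_right mult_ac sum.swap[of _ "{..<N}"])
  also have "\<dots> = complex_of_real (\<Sum>l<N. vv N (Suc l) * (cmod (\<Sum>j<N-1. c j * cis ((2 * real (Suc l) - 1) * psi N) ^ j))\<^sup>2)"
    by (simp only: of_real_sum of_real_mult sq_expand cis_pow_cnj)
  finally show ?thesis by (simp only: of_real_eq_iff)
qed


definition zet :: "nat \<Rightarrow> nat \<Rightarrow> complex" where "zet N k = cis (2 * real k * psi N)"
definition rho :: "nat \<Rightarrow> nat \<Rightarrow> complex" where "rho N l = cis ((2 * real l - 1) * psi N)"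
definition r0 :: "nat \<Rightarrow> complex" where "r0 N = cis (- psi N)"
definition GG :: "nat \<Rightarrow> complex \<Rightarrow> complex \<Rightarrow> complex" where
  "GG N r z = (\<Sum>j<N. z ^ j / r ^ Suc j)"
definition MM :: "nat \<Rightarrow> nat \<Rightarrow> complex \<Rightarrow> complex" where
  "MM N l z = (GG N (r0 N) z - GG N (rho N l) z) / (rho N l - r0 N)"
definition cM :: "nat \<Rightarrow> nat \<Rightarrow> nat \<Rightarrow> complex" where
  "cM N l j = (1 / r0 N ^ Suc j - 1 / rho N l ^ Suc j) / (rho N l - r0 N)"

lemma cis_diff: "cis a - cis b = 2 * \<i> * complex_of_real (sin ((a - b) / 2)) * cis ((a + b) / 2)"
proof -
  have s: "sin ((b - a) / 2) = - sin ((a - b) / 2)" by (metis minus_diff_eq minus_divide_left sin_minus)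
  have "cos a - cos b = - 2 * sin ((a - b) / 2) * sin ((a + b) / 2)"
    by (simp add: cos_diff_cos s algebra_simps)
  moreover have "sin a - sin b = 2 * sin ((a - b) / 2) * cos ((a + b) / 2)"
    by (simp add: sin_diff_sin)
  ultimately show ?thesis by (simp add: complex_eq_iff)
qed

lemma cis_diff_ne0: "sin ((a - b) / 2) \<noteq> 0 \<Longrightarrow> cis a - cis b \<noteq> 0"
  unfolding cis_diff by simp

lemma GG_tel:
  assumes "r \<noteq> 0"
  shows "(z - r) * GG N r z = z ^ N / r ^ N - 1"
proof -
  have "(z - r) * GG N r z = (\<Sum>j<N. z ^ Suc j / r ^ Suc j - z ^ j / r ^ j)"
    unfolding GG_def sum_distrib_left using assms
    by (intro sum.cong refl) (simp add: field_simps)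
  also have "\<dots> = z ^ N / r ^ N - 1" by (subst sum_lessThan_telescope) simp
  finally show ?thesis .
qed

lemma GG_eval:
  assumes "r ^ N = -1" "z \<noteq> r"
  shows "GG N r z = (- (z ^ N) - 1) / (z - r)"
proof -
  have r0: "r \<noteq> 0" using assms(1) by (cases N) auto
  have "(z - r) * GG N r z = - (z ^ N) - 1" using GG_tel[OF r0] assms(1) by simp
  then show ?thesis using assms(2) by (simp add: field_simps)
qed

lemma GG_self: "r \<noteq> 0 \<Longrightarrow> GG N r r = of_nat N / r"
  unfolding GG_def by simp

lemma zet_pow: "zet N k ^ N = 1"
proof (cases "N = 0")
  case False
  have a: "real N * (2 * real k * psi N) = 2 * pi * real k" unfolding psi_def using False by (simp add: field_simps)
  have "zet N k ^ N = cis (2 * pi * real k)" unfolding zet_def DeMoivre a ..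
  also have "\<dots> = 1" by (rule cis_multiple_2pi) simp
  finally show ?thesis .
qed simp

lemma cis_minus_pi: "cis (- pi) = -1"
  by (simp add: complex_eq_iff)

lemma rho_pow: "N > 0 \<Longrightarrow> rho N l ^ N = -1"
proof -
  assume N: "N > 0"
  have a: "real N * ((2 * real l - 1) * psi N) = 2 * pi * real l + - pi" unfolding psi_def using N
    by (simp add: field_simps)
  have "rho N l ^ N = cis (2 * pi * real l + - pi)" unfolding rho_def DeMoivre a ..
  also have "\<dots> = cis (2 * pi * real l) * cis (- pi)" by (rule cis_mult[symmetric])
  also have "\<dots> = -1" by (simp add: cis_multiple_2pi cis_minus_pi)
  finally show ?thesis .
qed

lemma r0_pow: "N > 0 \<Longrightarrow> r0 N ^ N = -1"
  unfolding r0_def DeMoivre psi_def by (simp add: cis_minus_pi)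

lemma MM_coeff:
  assumes N: "N > 0"
  shows "MM N l z = (\<Sum>j<N-1. cM N l j * z ^ j)"
proof -
  have "MM N l z = (\<Sum>j<N. cM N l j * z ^ j)"
    unfolding MM_def GG_def cM_def
    by (simp add: sum_subtractf[symmetric] sum_divide_distrib field_simps)
  also have "\<dots> = (\<Sum>j<Suc (N-1). cM N l j * z ^ j)" using N by simp
  also have "\<dots> = (\<Sum>j<N-1. cM N l j * z ^ j)"
  proof -
    have "cM N l (N - 1) = 0" unfolding cM_def using N r0_pow[OF N] rho_pow[OF N, of l] by simp
    then show ?thesis by simp
  qed
  finally show ?thesis .
qed


lemma cis_ne: "sin ((a - b) / 2) \<noteq> 0 \<Longrightarrow> cis a \<noteq> cis b"
  using cis_diff_ne0 by force

lemma frac1: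
  fixes x a b :: complex
  assumes "x \<noteq> a" "x \<noteq> b" "b \<noteq> a"
  shows "(-2 / (x - a) - -2 / (x - b)) / (b - a) = 2 / ((x - a) * (x - b))"
proof -
  have "x - a \<noteq> 0" "x - b \<noteq> 0" "b - a \<noteq> 0" using assms by auto
  then show ?thesis by (simp add: divide_simps)
qed

lemma psi_pos: "N > 0 \<Longrightarrow> psi N > 0" unfolding psi_def by simp

lemma sin_pos_lt: "0 < x \<Longrightarrow> x < real N \<Longrightarrow> N > 0 \<Longrightarrow> sin (x * psi N) > 0"
  unfolding psi_def by (intro sin_gt_zero) (auto simp: field_simps)

lemma rho_ne_r0: "0 < l \<Longrightarrow> l < N \<Longrightarrow> rho N l \<noteq> r0 N"
  unfolding rho_def r0_def
  by (rule cis_ne) (use sin_pos_lt[of "real l" N] in \<open>auto simp: algebra_simps\<close>)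

lemma zet_ne_r0: assumes "k < N" shows "zet N k \<noteq> r0 N"
  unfolding zet_def r0_def
proof (rule cis_ne)
  have "(2 * real k * psi N - - psi N) / 2 = (real k + 1/2) * psi N" by (simp add: field_simps)
  moreover have "sin ((real k + 1/2) * psi N) > 0" using assms by (intro sin_pos_lt) auto
  ultimately show "sin ((2 * real k * psi N - - psi N) / 2) \<noteq> 0" by simp
qed

lemma zet_ne_rho: assumes "N > 0" shows "zet N k \<noteq> rho N l"
  unfolding zet_def rho_def
proof (rule cis_ne)
  show "sin ((2 * real k * psi N - (2 * real l - 1) * psi N) / 2) \<noteq> 0"
  proof
    assume "sin ((2 * real k * psi N - (2 * real l - 1) * psi N) / 2) = 0"
    then obtain i :: int where i: "(2 * real k * psi N - (2 * real l - 1) * psi N) / 2 = of_int i * pi"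
      by (auto simp: sin_zero_iff_int2)
    then have "(2 * real k - 2 * real l + 1) * pi = (2 * of_int i * real N) * pi"
      using assms unfolding psi_def by (simp add: field_simps)
    then have "2 * real k - 2 * real l + 1 = 2 * of_int i * real N" by simp
    then have "2 * int k - 2 * int l + 1 = 2 * i * int N"
      by (metis (mono_tags, opaque_lifting) of_int_add of_int_diff of_int_eq_iff of_int_mult of_int_numeral of_int_of_nat_eq of_int_1)
    then have "even (2 * int k - 2 * int l + 1)" by (metis dvd_triv_left mult.assoc)
    then show False by simp
  qed
qed

lemma rho_ne_rho:
  assumes "0 < l" "l < N" "0 < l'" "l' < N" "l \<noteq> l'"
  shows "rho N l' \<noteq> rho N l"
  unfolding rho_def
proof (rule cis_ne)
  have N: "N > 0" using assms by simp
  have "sin (of_int (int l' - int l) * pi / real N) \<noteq> 0"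
    using assms by (intro sin_int_pi_div_ne0 N) auto
  moreover have "((2 * real l' - 1) * psi N - (2 * real l - 1) * psi N) / 2 = of_int (int l' - int l) * pi / real N"
    unfolding psi_def using N by (simp add: field_simps)
  ultimately show "sin (((2 * real l' - 1) * psi N - (2 * real l - 1) * psi N) / 2) \<noteq> 0" by simp
qed

lemma MM_zet:
  assumes "k < N" "0 < l" "l < N"
  shows "MM N l (zet N k) = 2 / ((zet N k - r0 N) * (zet N k - rho N l))"
proof -
  have N: "N > 0" using assms by simp
  have a: "zet N k - r0 N \<noteq> 0" using zet_ne_r0[OF assms(1)] by simp
  have b: "zet N k - rho N l \<noteq> 0" using zet_ne_rho[OF N] by simp
  have c: "rho N l - r0 N \<noteq> 0" using rho_ne_r0[OF assms(2,3)] by simp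
  have g1: "GG N (r0 N) (zet N k) = -2 / (zet N k - r0 N)"
    using GG_eval[OF r0_pow[OF N] zet_ne_r0[OF assms(1)]] zet_pow[of N k] by simp
  have g2: "GG N (rho N l) (zet N k) = -2 / (zet N k - rho N l)"
    using GG_eval[OF rho_pow[OF N] zet_ne_rho[OF N]] zet_pow[of N k] by simp
  show ?thesis unfolding MM_def g1 g2 using a b c by (intro frac1) auto
qed

lemma MM_rho_other:
  assumes "0 < l" "l < N" "0 < l'" "l' < N" "l \<noteq> l'"
  shows "MM N l (rho N l') = 0"
proof -
  have N: "N > 0" using assms by simp
  have g1: "GG N (r0 N) (rho N l') = 0"
    using GG_eval[OF r0_pow[OF N] rho_ne_r0[OF assms(3,4)]] rho_pow[OF N, of l'] by simp
  have g2: "GG N (rho N l) (rho N l') = 0"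
    using GG_eval[OF rho_pow[OF N] rho_ne_rho[OF assms]] rho_pow[OF N, of l'] by simp
  show ?thesis unfolding MM_def g1 g2 by simp
qed

lemma MM_rho_self:
  assumes "0 < l" "l < N"
  shows "MM N l (rho N l) = - of_nat N / (rho N l * (rho N l - r0 N))"
proof -
  have N: "N > 0" using assms by simp
  have c: "rho N l - r0 N \<noteq> 0" using rho_ne_r0[OF assms] by simp
  have r: "rho N l \<noteq> 0" unfolding rho_def by simp
  have g1: "GG N (r0 N) (rho N l) = 0"
    using GG_eval[OF r0_pow[OF N] rho_ne_r0[OF assms]] rho_pow[OF N, of l] by simp
  show ?thesis unfolding MM_def g1 GG_self[OF r] using c r by (simp add: field_simps)
qed


definition mu :: "nat \<Rightarrow> nat \<Rightarrow> complex" where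
  "mu N l = 1 / (complex_of_real (sqrt (vv N l)) * MM N l (rho N l))"
definition Xc :: "nat \<Rightarrow> nat \<Rightarrow> nat \<Rightarrow> complex" where
  "Xc N i j = complex_of_real (sqrt (ww N (Suc i))) * mu N (Suc j) * MM N (Suc j) (zet N (Suc i))"

lemma ww_nonneg: "k < N \<Longrightarrow> 0 \<le> ww N k"
proof -
  assume k: "k < N"
  then have N: "N > 0" by simp
  have "0 \<le> sin (real k * psi N)" using sin_p_nonneg[OF k] .
  moreover have "0 < sin ((real k + 1/2) * psi N)" using k N by (intro sin_pos_lt) auto
  ultimately show ?thesis unfolding ww_def by simp
qed

lemma ww_0: "ww N 0 = 0" unfolding ww_def by simp

lemma vv_pos: "0 < l \<Longrightarrow> l < N \<Longrightarrow> 0 < vv N l"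
proof -
  assume l: "0 < l" "l < N"
  then have N: "N > 0" by simp
  have "0 < sin (real l * psi N)" using l N by (intro sin_pos_lt) auto
  moreover have "0 < sin ((real l - 1/2) * psi N)" using l N by (intro sin_pos_lt) auto
  ultimately show ?thesis unfolding vv_def by simp
qed

lemma vv_N: "N > 0 \<Longrightarrow> vv N N = 0"
  unfolding vv_def psi_def by simp

lemma MM_rho_self_ne0: "0 < l \<Longrightarrow> l < N \<Longrightarrow> MM N l (rho N l) \<noteq> 0"
  using MM_rho_self[of l N] rho_ne_r0[of l N] by (simp add: rho_def)

lemma mu_MM: "0 < l \<Longrightarrow> l < N \<Longrightarrow> vv N l * (cmod (mu N l * MM N l (rho N l)))\<^sup>2 = 1"
proof -
  assume l: "0 < l" "l < N"
  have v: "0 < vv N l" using vv_pos[OF l] .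
  have m: "MM N l (rho N l) \<noteq> 0" using MM_rho_self_ne0[OF l] .
  have "mu N l * MM N l (rho N l) = 1 / complex_of_real (sqrt (vv N l))"
    unfolding mu_def using m by (simp add: field_simps)
  then have "cmod (mu N l * MM N l (rho N l)) = 1 / sqrt (vv N l)"
    using v by (simp add: norm_divide)
  then show ?thesis using v by (simp add: power_divide)
qed

lemma Xc_iso:
  assumes N: "N = Suc n" "n \<ge> 1"
  shows "vec_norm n (mat_apply n (Xc N) y) = vec_norm n y"
proof -
  have N0: "N > 0" "N \<ge> 2" using N by auto
  define g where "g = (\<lambda>z. \<Sum>j<n. y j * mu N (Suc j) * MM N (Suc j) z)"
  define C where "C = (\<lambda>t. \<Sum>j<n. y j * mu N (Suc j) * cM N (Suc j) t)"
  have app: "mat_apply n (Xc N) y i = complex_of_real (sqrt (ww N (Suc i))) * g (zet N (Suc i))" for i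
    unfolding mat_apply_def Xc_def g_def by (simp add: sum_distrib_left mult_ac)
  have gC: "g z = (\<Sum>t<N-1. C t * z ^ t)" for z
  proof -
    have "g z = (\<Sum>j<n. y j * mu N (Suc j) * (\<Sum>t<N-1. cM N (Suc j) t * z ^ t))"
      unfolding g_def using MM_coeff[OF N0(1)] by simp
    also have "\<dots> = (\<Sum>t<N-1. C t * z ^ t)"
      unfolding C_def by (simp add: sum_distrib_left sum_distrib_right mult_ac sum.swap[of _ "{..<n}"])
    finally show ?thesis .
  qed
  have "(vec_norm n (mat_apply n (Xc N) y))\<^sup>2 = (\<Sum>i<n. ww N (Suc i) * (cmod (g (zet N (Suc i))))\<^sup>2)"
    unfolding vec_norm_sq app using ww_nonneg N
    by (intro sum.cong refl) (simp add: norm_mult power_mult_distrib)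
  also have "\<dots> = (\<Sum>k<N. ww N k * (cmod (g (zet N k)))\<^sup>2)"
    unfolding N(1) sum.lessThan_Suc_shift by (simp add: ww_0)
  also have "\<dots> = (\<Sum>k<N. ww N k * (cmod (\<Sum>t<N-1. C t * cis (2 * real k * psi N) ^ t))\<^sup>2)"
    unfolding gC zet_def ..
  also have "\<dots> = (\<Sum>l<N. vv N (Suc l) * (cmod (\<Sum>t<N-1. C t * cis ((2 * real (Suc l) - 1) * psi N) ^ t))\<^sup>2)"
    by (rule poly_quad[OF N0(2)])
  also have "\<dots> = (\<Sum>l<N. vv N (Suc l) * (cmod (g (rho N (Suc l))))\<^sup>2)"
    unfolding gC rho_def ..
  also have "\<dots> = (\<Sum>l<n. vv N (Suc l) * (cmod (g (rho N (Suc l))))\<^sup>2)"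
  proof -
    have vN: "vv N (Suc n) = 0" using vv_N[OF N0(1)] N(1) by simp
    have "{..<N} = insert n {..<n}" using N(1) by auto
    then show ?thesis using vN by simp
  qed
  also have "\<dots> = (\<Sum>l<n. (cmod (y l))\<^sup>2)"
  proof (intro sum.cong refl)
    fix l assume l: "l \<in> {..<n}"
    have "g (rho N (Suc l)) = (\<Sum>j<n. if j = l then y l * mu N (Suc l) * MM N (Suc l) (rho N (Suc l)) else 0)"
      unfolding g_def
    proof (intro sum.cong refl)
      fix j assume j: "j \<in> {..<n}"
      show "y j * mu N (Suc j) * MM N (Suc j) (rho N (Suc l))
          = (if j = l then y l * mu N (Suc l) * MM N (Suc l) (rho N (Suc l)) else 0)"
        using j l N by (auto simp: MM_rho_other)
    qed
    also have "\<dots> = y l * mu N (Suc l) * MM N (Suc l) (rho N (Suc l))" using l by simp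
    finally have "vv N (Suc l) * (cmod (g (rho N (Suc l))))\<^sup>2
        = (cmod (y l))\<^sup>2 * (vv N (Suc l) * (cmod (mu N (Suc l) * MM N (Suc l) (rho N (Suc l))))\<^sup>2)"
      by (simp add: norm_mult power_mult_distrib mult_ac)
    also have "\<dots> = (cmod (y l))\<^sup>2" using l N by (subst mu_MM) auto
    finally show "vv N (Suc l) * (cmod (g (rho N (Suc l))))\<^sup>2 = (cmod (y l))\<^sup>2" .
  qed
  also have "\<dots> = (vec_norm n y)\<^sup>2" unfolding vec_norm_sq ..
  finally show ?thesis using vec_norm_nonneg by (metis power2_eq_iff_nonneg)
qed


lemma alg:
  fixes W S1 e1 r Nn V S2 e2 S3 e3 ck cl :: complex
  assumes "e2 \<noteq> 0" "e3 \<noteq> 0" "S2 \<noteq> 0" "S3 \<noteq> 0" "V \<noteq> 0" "Nn \<noteq> 0"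
  shows "W * (- (r * (2 * \<i> * S1 * e1)) / (Nn * V)) * (2 / ((2 * \<i> * S2 * e2) * (2 * \<i> * S3 * e3))) * (- \<i> * ck) * cl
       = (W * S1 / (Nn * V * S2 * S3)) * ((r * e1 * ck * cl) / (e2 * e3))"
proof -
  have i: "\<i> * \<i> = -1" by simp
  show ?thesis using assms by (simp add: divide_simps) (simp add: algebra_simps i)
qed

definition Rm :: "nat \<Rightarrow> nat \<Rightarrow> nat \<Rightarrow> real" where
  "Rm N k l = sqrt (ww N k) * sin (real l * psi N)
     / (real N * sqrt (vv N l) * sin ((real k + 1/2) * psi N) * sin ((real k - real l + 1/2) * psi N))"

lemma sin_half_ne0: assumes "N > 0" shows "sin ((real k - real l + 1/2) * psi N) \<noteq> 0"
proof
  assume "sin ((real k - real l + 1/2) * psi N) = 0"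
  then obtain i :: int where i: "(real k - real l + 1/2) * psi N = of_int i * pi"
    by (auto simp: sin_zero_iff_int2)
  then have "(2 * real k - 2 * real l + 1) * pi = (2 * of_int i * real N) * pi"
    using assms unfolding psi_def by (simp add: field_simps)
  then have "2 * real k - 2 * real l + 1 = 2 * of_int i * real N" by simp
  then have "2 * int k - 2 * int l + 1 = 2 * i * int N"
    by (metis (mono_tags, opaque_lifting) of_int_add of_int_diff of_int_eq_iff of_int_mult of_int_numeral of_int_of_nat_eq of_int_1)
  then have "even (2 * int k - 2 * int l + 1)" by (metis dvd_triv_left mult.assoc)
  then show False by simp
qed

lemma Rm_Xc:
  assumes k: "k < N" and l: "0 < l" "l < N"
  shows "complex_of_real (Rm N k l)
    = complex_of_real (sqrt (ww N k)) * mu N l * MM N l (zet N k)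
      * (- \<i> * cis (2 * real k * psi N)) * cis (- ((2 * real l - 1) * psi N))"
proof -
  have N: "N > 0" using l by simp
  define r where "r = rho N l"
  define S1 where "S1 = sin (real l * psi N)"
  define S2 where "S2 = sin ((real k + 1/2) * psi N)"
  define S3 where "S3 = sin ((real k - real l + 1/2) * psi N)"
  define e1 where "e1 = cis ((real l - 1) * psi N)"
  define e2 where "e2 = cis ((real k - 1/2) * psi N)"
  define e3 where "e3 = cis ((real k + real l - 1/2) * psi N)"
  define ck where "ck = cis (2 * real k * psi N)"
  define cl where "cl = cis (- ((2 * real l - 1) * psi N))"
  define V where "V = sqrt (vv N l)"
  define W where "W = sqrt (ww N k)"
  have r0: "r \<noteq> 0" unfolding r_def rho_def by simp
  have rr: "r - r0 N \<noteq> 0" unfolding r_def using rho_ne_r0[OF l] by simp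
  have V0: "V \<noteq> 0" unfolding V_def using vv_pos[OF l] by simp
  have S20: "S2 \<noteq> 0" unfolding S2_def using k N by (intro sin_pos_lt[THEN less_imp_neq, symmetric]) auto
  have S30: "S3 \<noteq> 0" unfolding S3_def using sin_half_ne0[OF N] .
  have mu: "mu N l = - (r * (r - r0 N)) / (of_nat N * complex_of_real V)"
  proof -
    have Mr: "MM N l r = - of_nat N / (r * (r - r0 N))" using MM_rho_self[OF l] unfolding r_def .
    show ?thesis unfolding mu_def r_def[symmetric] V_def[symmetric] Mr using r0 rr N V0
      by (simp add: field_simps)
  qed
  have Mz: "MM N l (zet N k) = 2 / ((zet N k - r0 N) * (zet N k - r))"
    unfolding r_def by (rule MM_zet[OF k l])
  have D1: "r - r0 N = 2 * \<i> * complex_of_real S1 * e1"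
  proof -
    have a1: "((2 * real l - 1) * psi N - - psi N) / 2 = real l * psi N" by (simp add: field_simps)
    have a2: "((2 * real l - 1) * psi N + - psi N) / 2 = (real l - 1) * psi N" by (simp add: field_simps)
    show ?thesis unfolding r_def rho_def r0_def cis_diff a1 a2 S1_def e1_def ..
  qed
  have D2: "zet N k - r0 N = 2 * \<i> * complex_of_real S2 * e2"
  proof -
    have a1: "(2 * real k * psi N - - psi N) / 2 = (real k + 1/2) * psi N" by (simp add: field_simps)
    have a2: "(2 * real k * psi N + - psi N) / 2 = (real k - 1/2) * psi N" by (simp add: field_simps)
    show ?thesis unfolding zet_def r0_def cis_diff a1 a2 S2_def e2_def ..
  qed
  have D3: "zet N k - r = 2 * \<i> * complex_of_real S3 * e3"
  proof -
    have a1: "(2 * real k * psi N - (2 * real l - 1) * psi N) / 2 = (real k - real l + 1/2) * psi N" by (simp add: field_simps)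
    have a2: "(2 * real k * psi N + (2 * real l - 1) * psi N) / 2 = (real k + real l - 1/2) * psi N" by (simp add: field_simps)
    show ?thesis unfolding zet_def r_def rho_def cis_diff a1 a2 S3_def e3_def ..
  qed
  have cp: "r * e1 * ck * cl = e2 * e3"
    unfolding r_def rho_def e1_def ck_def cl_def e2_def e3_def cis_mult by (simp add: algebra_simps)
  have "complex_of_real W * mu N l * MM N l (zet N k) * (- \<i> * ck) * cl
      = complex_of_real W * (- (r * (2 * \<i> * complex_of_real S1 * e1)) / (of_nat N * complex_of_real V))
        * (2 / ((2 * \<i> * complex_of_real S2 * e2) * (2 * \<i> * complex_of_real S3 * e3))) * (- \<i> * ck) * cl"
    unfolding mu Mz D1 D2 D3 ..
  also have "\<dots> = (complex_of_real W * complex_of_real S1 / (of_nat N * complex_of_real V * complex_of_real S2 * complex_of_real S3))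
        * ((r * e1 * ck * cl) / (e2 * e3))"
    by (rule alg) (use V0 S20 S30 N in \<open>auto simp: e2_def e3_def\<close>)
  also have "\<dots> = complex_of_real (Rm N k l)"
    unfolding cp Rm_def W_def[symmetric] V_def[symmetric] S1_def[symmetric] S2_def[symmetric] S3_def[symmetric]
    by (simp add: e2_def e3_def)
  finally show ?thesis unfolding W_def ck_def cl_def by simp
qed


definition X0 :: "nat \<Rightarrow> nat \<Rightarrow> nat \<Rightarrow> real" where
  "X0 N i j = (if i < N - 1 \<and> j < N - 1 then Rm N (Suc i) (Suc j) else 0)"

lemma vec_norm_mono: "n \<le> nc \<Longrightarrow> vec_norm n y \<le> vec_norm nc y"
  unfolding vec_norm_def by (intro real_sqrt_le_mono sum_mono2) auto

lemma X0_complex_iso: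
  assumes N: "N = Suc n" "n \<ge> 1" and nc: "n \<le> nc"
  shows "vec_norm n (mat_apply nc (\<lambda>i j. complex_of_real (X0 N i j)) y) = vec_norm n y"
proof -
  define al where "al = (\<lambda>i. - \<i> * cis (2 * real (Suc i) * psi N))"
  define be where "be = (\<lambda>j. cis (- ((2 * real (Suc j) - 1) * psi N)))"
  have e: "mat_apply nc (\<lambda>i j. complex_of_real (X0 N i j)) y i = al i * mat_apply n (Xc N) (\<lambda>j. be j * y j) i"
    if i: "i < n" for i
  proof -
    have "mat_apply nc (\<lambda>i j. complex_of_real (X0 N i j)) y i = (\<Sum>j<n. complex_of_real (X0 N i j) * y j)"
      unfolding mat_apply_def using nc
      by (intro sum.mono_neutral_right) (auto simp: X0_def N)
    also have "\<dots> = (\<Sum>j<n. al i * (Xc N i j * (be j * y j)))"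
    proof (intro sum.cong refl)
      fix j assume j: "j \<in> {..<n}"
      have "complex_of_real (X0 N i j) = complex_of_real (Rm N (Suc i) (Suc j))"
        using i j N by (simp add: X0_def)
      also have "\<dots> = Xc N i j * al i * be j"
        unfolding Xc_def al_def be_def using i j N by (intro Rm_Xc) auto
      finally show "complex_of_real (X0 N i j) * y j = al i * (Xc N i j * (be j * y j))" by (simp add: mult_ac)
    qed
    also have "\<dots> = al i * mat_apply n (Xc N) (\<lambda>j. be j * y j) i"
      unfolding mat_apply_def by (simp add: sum_distrib_left)
    finally show ?thesis .
  qed
  have "vec_norm n (mat_apply nc (\<lambda>i j. complex_of_real (X0 N i j)) y) = vec_norm n (mat_apply n (Xc N) (\<lambda>j. be j * y j))"
    unfolding vec_norm_def by (intro arg_cong[where f = sqrt] sum.cong refl) (simp add: e norm_mult al_def)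
  also have "\<dots> = vec_norm n (\<lambda>j. be j * y j)" by (rule Xc_iso[OF N])
  also have "\<dots> = vec_norm n y" unfolding vec_norm_def by (simp add: norm_mult be_def)
  finally show ?thesis .
qed

lemma X0_op_complex:
  assumes N: "N = Suc n" "n \<ge> 1" and nc: "n \<le> nc"
  shows "op_norm n nc (\<lambda>i j. complex_of_real (X0 N i j)) \<le> 1"
proof (rule op_norm_le)
  fix y :: "nat \<Rightarrow> complex" assume "vec_norm nc y \<le> 1"
  then show "vec_norm n (mat_apply nc (\<lambda>i j. complex_of_real (X0 N i j)) y) \<le> 1"
    unfolding X0_complex_iso[OF N nc] using vec_norm_mono[OF nc, of y] by simp
qed

lemma X0_op_real:
  assumes N: "N = Suc n" "n \<ge> 1" and nc: "n \<le> nc"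
  shows "op_norm n nc (\<lambda>i j. X0 N i j) \<le> 1"
proof (rule op_norm_le)
  fix y :: "nat \<Rightarrow> real" assume y: "vec_norm nc y \<le> 1"
  define yc where "yc = (\<lambda>j. complex_of_real (y j))"
  have "mat_apply nc (\<lambda>i j. complex_of_real (X0 N i j)) yc i = complex_of_real (mat_apply nc (\<lambda>i j. X0 N i j) y i)" for i
    unfolding mat_apply_def yc_def by simp
  then have "vec_norm n (mat_apply nc (\<lambda>i j. X0 N i j) y) = vec_norm n (mat_apply nc (\<lambda>i j. complex_of_real (X0 N i j)) yc)"
    unfolding vec_norm_def by simp
  also have "\<dots> = vec_norm n yc" by (rule X0_complex_iso[OF N nc])
  also have "\<dots> = vec_norm n y" unfolding vec_norm_def yc_def by simp
  also have "\<dots> \<le> 1" using vec_norm_mono[OF nc, of y] y by simp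
  finally show "vec_norm n (mat_apply nc (\<lambda>i j. X0 N i j) y) \<le> 1" .
qed


lemma cos_sum_zero:
  assumes N: "N \<ge> 2"
  shows "(\<Sum>k<N. cos (2 * real k * psi N + f)) = 0"
proof -
  have s: "sin (psi N) > 0" using N by (intro sin_pos_lt[of 1 N, simplified]) auto
  have "2 * sin (psi N) * (\<Sum>k<N. cos (2 * real k * psi N + f)) = sin ((2 * real N - 1) * psi N + f) - sin (f - psi N)"
    by (rule sum_cos_tel)
  also have "(2 * real N - 1) * psi N + f = (f - psi N) + 2 * pi * 1"
    unfolding psi_def using N by (simp add: field_simps)
  also have "sin ((f - psi N) + 2 * pi * 1) = sin (f - psi N)" by (simp only: sin_periodic mult_1_right)
  finally show ?thesis using s by simp
qed

lemma sum_shift0: "f 0 = (0::real) \<Longrightarrow> (\<Sum>i<n. f (Suc i)) = (\<Sum>k<Suc n. f k)"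
  by (subst sum.lessThan_Suc_shift) simp

lemma T1: assumes "N = Suc n" "n \<ge> 1"
  shows "(\<Sum>i<n. (sin (real (Suc i) * psi N))\<^sup>2) = real N / 2"
proof -
  have N: "N \<ge> 2" using assms by simp
  have "(\<Sum>i<n. (sin (real (Suc i) * psi N))\<^sup>2) = (\<Sum>k<N. (sin (real k * psi N))\<^sup>2)"
    unfolding assms(1) by (rule sum_shift0) simp
  also have "\<dots> = (\<Sum>k<N. (1 - cos (2 * real k * psi N + 0)) / 2)"
  proof (intro sum.cong refl)
    fix k
    have "(sin (real k * psi N))\<^sup>2 = (cos (real k * psi N - real k * psi N) - cos (real k * psi N + real k * psi N)) / 2"
      unfolding power2_eq_square sin_times_sin ..
    then show "(sin (real k * psi N))\<^sup>2 = (1 - cos (2 * real k * psi N + 0)) / 2" by (simp add: algebra_simps)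
  qed
  also have "\<dots> = (real N - (\<Sum>k<N. cos (2 * real k * psi N + 0))) / 2"
    by (simp add: sum_divide_distrib[symmetric] sum_subtractf)
  also have "\<dots> = real N / 2" using cos_sum_zero[OF N, of 0] by (simp only:) simp
  finally show ?thesis .
qed

lemma sum_half: assumes N: "N \<ge> 2"
  shows "(\<Sum>k<N. (c - cos (2 * real k * psi N + f)) / 2) = real N * c / 2"
proof -
  have "(\<Sum>k<N. (c - cos (2 * real k * psi N + f)) / 2) = (real N * c - (\<Sum>k<N. cos (2 * real k * psi N + f))) / 2"
    by (simp add: sum_divide_distrib[symmetric] sum_subtractf)
  then show ?thesis using cos_sum_zero[OF N, of f] by simp
qed

lemma T2: assumes "N = Suc n" "n \<ge> 1"
  shows "(\<Sum>i<n. sin (real (Suc i) * psi N) * sin (real (Suc (Suc i)) * psi N)) = real N * cos (psi N) / 2"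
proof -
  have N: "N \<ge> 2" using assms by simp
  have "(\<Sum>i<n. sin (real (Suc i) * psi N) * sin (real (Suc (Suc i)) * psi N))
      = (\<Sum>k<N. sin (real k * psi N) * sin (real (Suc k) * psi N))"
    unfolding assms(1) by (rule sum_shift0) simp
  also have "\<dots> = (\<Sum>k<N. (cos (psi N) - cos (2 * real k * psi N + psi N)) / 2)"
  proof (intro sum.cong refl)
    fix k
    show "sin (real k * psi N) * sin (real (Suc k) * psi N) = (cos (psi N) - cos (2 * real k * psi N + psi N)) / 2"
      unfolding sin_times_sin by (simp add: algebra_simps)
  qed
  also have "\<dots> = real N * cos (psi N) / 2" by (rule sum_half[OF N])
  finally show ?thesis .
qed

lemma T3: assumes "N = Suc n" "n \<ge> 1"
  shows "(\<Sum>i<n. ww N (Suc i)) = real N * cos (psi N / 2) / 2"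
proof -
  have N: "N \<ge> 2" using assms by simp
  have "(\<Sum>i<n. ww N (Suc i)) = (\<Sum>k<N. ww N k)"
    unfolding assms(1) by (rule sum_shift0) (simp add: ww_0)
  also have "\<dots> = (\<Sum>k<N. (cos (psi N / 2) - cos (2 * real k * psi N + psi N / 2)) / 2)"
  proof (intro sum.cong refl)
    fix k
    show "ww N k = (cos (psi N / 2) - cos (2 * real k * psi N + psi N / 2)) / 2"
      unfolding ww_def sin_times_sin by (simp add: algebra_simps)
  qed
  also have "\<dots> = real N * cos (psi N / 2) / 2" by (rule sum_half[OF N])
  finally show ?thesis .
qed

lemma T4: assumes "N = Suc n" "n \<ge> 1"
  shows "(\<Sum>i<n. vv N (Suc i)) = real N * cos (psi N / 2) / 2"
proof -
  have N: "N \<ge> 2" using assms by simp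
  have "(\<Sum>i<N. vv N (Suc i)) = (\<Sum>i<n. vv N (Suc i)) + vv N N"
    unfolding assms(1) by simp
  then have "(\<Sum>i<n. vv N (Suc i)) = (\<Sum>i<N. vv N (Suc i))" using vv_N[of N] N by simp
  also have "\<dots> = (\<Sum>k<N. (cos (psi N / 2) - cos (2 * real k * psi N + 3 * psi N / 2)) / 2)"
  proof (intro sum.cong refl)
    fix k
    show "vv N (Suc k) = (cos (psi N / 2) - cos (2 * real k * psi N + 3 * psi N / 2)) / 2"
      unfolding vv_def sin_times_sin by (simp add: algebra_simps)
  qed
  also have "\<dots> = real N * cos (psi N / 2) / 2" by (rule sum_half[OF N])
  finally show ?thesis .
qed


lemma Sigma_of_real: "(Sigma_mat i j :: 'a::real_normed_field) = of_real (Sigma_mat i j)"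
  unfolding Sigma_mat_def by simp

lemma lower_gen:
  fixes X :: "nat \<Rightarrow> nat \<Rightarrow> real" and xi eta :: "nat \<Rightarrow> real"
  assumes "(\<Sum>i<m. xi i * mat_apply nc (schur_prod Sigma_mat X) eta i) = P"
  shows "P \<le> vec_norm m xi * op_norm m nc (schur_prod (Sigma_mat :: nat \<Rightarrow> nat \<Rightarrow> 'a::real_normed_field) (\<lambda>i j. of_real (X i j))) * vec_norm nc eta"
proof -
  define U where "U = mat_apply nc (schur_prod Sigma_mat X) eta"
  define etaa :: "nat \<Rightarrow> 'a" where "etaa = (\<lambda>j. of_real (eta j))"
  have app: "mat_apply nc (schur_prod (Sigma_mat :: nat \<Rightarrow> nat \<Rightarrow> 'a) (\<lambda>i j. of_real (X i j))) etaa i = of_real (U i)" for i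
    unfolding U_def mat_apply_def schur_prod_def etaa_def by (simp add: Sigma_of_real[where 'a='a])
  have nU: "vec_norm m (mat_apply nc (schur_prod (Sigma_mat :: nat \<Rightarrow> nat \<Rightarrow> 'a) (\<lambda>i j. of_real (X i j))) etaa) = L2_set U {..<m}"
    unfolding vec_norm_L2 app by (simp add: L2_set_def)
  have ne: "vec_norm nc etaa = vec_norm nc eta" unfolding vec_norm_def etaa_def by simp
  have nxi: "vec_norm m xi = L2_set xi {..<m}" unfolding vec_norm_def L2_set_def by simp
  have "P \<le> (\<Sum>i<m. \<bar>xi i\<bar> * \<bar>U i\<bar>)"
    unfolding assms[symmetric] U_def by (intro sum_mono) (simp add: abs_mult[symmetric])
  also have "\<dots> \<le> L2_set xi {..<m} * L2_set U {..<m}" by (rule L2_set_mult_ineq)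
  also have "\<dots> \<le> vec_norm m xi * (op_norm m nc (schur_prod (Sigma_mat :: nat \<Rightarrow> nat \<Rightarrow> 'a) (\<lambda>i j. of_real (X i j))) * vec_norm nc eta)"
  proof -
    have "L2_set U {..<m} \<le> op_norm m nc (schur_prod (Sigma_mat :: nat \<Rightarrow> nat \<Rightarrow> 'a) (\<lambda>i j. of_real (X i j))) * vec_norm nc eta"
      using op_norm_bound[of m nc "schur_prod (Sigma_mat :: nat \<Rightarrow> nat \<Rightarrow> 'a) (\<lambda>i j. of_real (X i j))" etaa]
      unfolding nU ne .
    then show ?thesis unfolding nxi by (intro mult_left_mono) auto
  qed
  finally show ?thesis by (simp add: mult_ac)
qed


definition xiv :: "nat \<Rightarrow> nat \<Rightarrow> real" where "xiv N i = (-1)^i * sqrt (ww N (Suc i))"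
definition etav :: "nat \<Rightarrow> nat \<Rightarrow> real" where
  "etav N j = (if j < N - 1 then (-1)^j * sqrt (vv N (Suc j)) else 0)"

lemma sum_two:
  assumes "i < nc"
  shows "(\<Sum>j<nc. (Sigma_mat i j :: real) * f j) = f i + (if Suc i < nc then f (Suc i) else 0)"
proof -
  have "(\<Sum>j<nc. (Sigma_mat i j :: real) * f j) = (\<Sum>j<nc. (if j = i then f i else 0) + (if j = Suc i then f (Suc i) else 0))"
    by (intro sum.cong refl) (auto simp: Sigma_mat_def)
  also have "\<dots> = f i + (if Suc i < nc then f (Suc i) else 0)"
    using assms by (simp add: sum.distrib)
  finally show ?thesis .
qed

lemma diag_term:
  assumes N: "N = Suc n" and k: "0 < k" "k < N"
  shows "sqrt (ww N k) * Rm N k k * sqrt (vv N k) = (sin (real k * psi N))\<^sup>2 / (real N * sin (psi N / 2))"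
proof -
  have N0: "N > 0" using N by simp
  have V: "sqrt (vv N k) > 0" using vv_pos[OF k] by simp
  have c: "sin ((real k + 1/2) * psi N) > 0" using k N0 by (intro sin_pos_lt) auto
  have d: "sin (psi N / 2) > 0" using sin_pos_lt[of "1/2" N] N0 by simp
  have W: "(sqrt (ww N k))\<^sup>2 = sin (real k * psi N) * sin ((real k + 1/2) * psi N)"
    using ww_nonneg[OF k(2)] unfolding ww_def by simp
  have "sqrt (ww N k) * Rm N k k * sqrt (vv N k)
      = (sqrt (ww N k))\<^sup>2 * sin (real k * psi N) / (real N * sin ((real k + 1/2) * psi N) * sin (psi N / 2))"
    unfolding Rm_def using V N0 by (simp add: field_simps power2_eq_square)
  also have "\<dots> = (sin (real k * psi N))\<^sup>2 / (real N * sin (psi N / 2))"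
    unfolding W using c d N0 by (simp add: field_simps power2_eq_square)
  finally show ?thesis .
qed

lemma off_term:
  assumes N: "N = Suc n" and k: "0 < k" "Suc k < N"
  shows "- (sqrt (ww N k) * Rm N k (Suc k) * sqrt (vv N (Suc k)))
       = sin (real k * psi N) * sin (real (Suc k) * psi N) / (real N * sin (psi N / 2))"
proof -
  have N0: "N > 0" using N by simp
  have V: "sqrt (vv N (Suc k)) > 0" using vv_pos[of "Suc k" N] k by simp
  have c: "sin ((real k + 1/2) * psi N) > 0" using k N0 by (intro sin_pos_lt) auto
  have d: "sin (psi N / 2) > 0" using sin_pos_lt[of "1/2" N] N0 by simp
  have W: "(sqrt (ww N k))\<^sup>2 = sin (real k * psi N) * sin ((real k + 1/2) * psi N)"
    using ww_nonneg[of k N] k unfolding ww_def by simp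
  have a: "(real k - real (Suc k) + 1/2) * psi N = - (psi N / 2)" by (simp add: algebra_simps)
  have "- (sqrt (ww N k) * Rm N k (Suc k) * sqrt (vv N (Suc k)))
      = (sqrt (ww N k))\<^sup>2 * sin (real (Suc k) * psi N) / (real N * sin ((real k + 1/2) * psi N) * sin (psi N / 2))"
    unfolding Rm_def a sin_minus using V N0 by (simp add: field_simps power2_eq_square)
  also have "\<dots> = sin (real k * psi N) * sin (real (Suc k) * psi N) / (real N * sin (psi N / 2))"
    unfolding W using c d N0 by (simp add: field_simps power2_eq_square)
  finally show ?thesis .
qed

lemma row_val:
  assumes N: "N = Suc n" "n \<ge> 1" and nc: "n \<le> nc" "nc \<le> Suc n" and i: "i < n"
  shows "xiv N i * mat_apply nc (schur_prod Sigma_mat (X0 N)) (etav N) i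
    = ((sin (real (Suc i) * psi N))\<^sup>2 + sin (real (Suc i) * psi N) * sin (real (Suc (Suc i)) * psi N))
      / (real N * sin (psi N / 2))"
proof -
  have N0: "N > 0" using N by simp
  have inc: "i < nc" using i nc by simp
  have m: "mat_apply nc (schur_prod Sigma_mat (X0 N)) (etav N) i
      = X0 N i i * etav N i + (if Suc i < nc then X0 N i (Suc i) * etav N (Suc i) else 0)"
    unfolding mat_apply_def schur_prod_def using sum_two[OF inc, of "\<lambda>j. X0 N i j * etav N j"]
    by (simp add: mult_ac)
  have d: "xiv N i * (X0 N i i * etav N i) = (sin (real (Suc i) * psi N))\<^sup>2 / (real N * sin (psi N / 2))"
  proof -
    have "xiv N i * (X0 N i i * etav N i) = sqrt (ww N (Suc i)) * Rm N (Suc i) (Suc i) * sqrt (vv N (Suc i))"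
      unfolding xiv_def etav_def X0_def using i N by (simp add: mult_ac)
    also have "\<dots> = (sin (real (Suc i) * psi N))\<^sup>2 / (real N * sin (psi N / 2))"
      using i N by (intro diag_term[OF N(1)]) auto
    finally show ?thesis .
  qed
  show ?thesis
  proof (cases "Suc i < n")
    case True
    have o: "xiv N i * (X0 N i (Suc i) * etav N (Suc i))
        = sin (real (Suc i) * psi N) * sin (real (Suc (Suc i)) * psi N) / (real N * sin (psi N / 2))"
    proof -
      have "xiv N i * (X0 N i (Suc i) * etav N (Suc i)) = - (sqrt (ww N (Suc i)) * Rm N (Suc i) (Suc (Suc i)) * sqrt (vv N (Suc (Suc i))))"
        unfolding xiv_def etav_def X0_def using True N by (simp add: mult_ac)
      also have "\<dots> = sin (real (Suc i) * psi N) * sin (real (Suc (Suc i)) * psi N) / (real N * sin (psi N / 2))"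
        using True N by (intro off_term[OF N(1)]) auto
      finally show ?thesis .
    qed
    have "Suc i < nc" using True nc by simp
    then show ?thesis unfolding m using d o by (simp add: distrib_left add_divide_distrib)
  next
    case False
    then have si: "Suc i = n" using i by simp
    have z: "X0 N i (Suc i) = 0" unfolding X0_def using si N by simp
    have s0: "sin (real (Suc (Suc i)) * psi N) = 0" using si N unfolding psi_def by simp
    show ?thesis unfolding m using d z s0 by simp
  qed
qed

lemma pairing:
  assumes N: "N = Suc n" "n \<ge> 1" and nc: "n \<le> nc" "nc \<le> Suc n"
  shows "(\<Sum>i<n. xiv N i * mat_apply nc (schur_prod Sigma_mat (X0 N)) (etav N) i)
    = (real N / 2 + real N * cos (psi N) / 2) / (real N * sin (psi N / 2))"
proof -
  have "(\<Sum>i<n. xiv N i * mat_apply nc (schur_prod Sigma_mat (X0 N)) (etav N) i)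
     = (\<Sum>i<n. ((sin (real (Suc i) * psi N))\<^sup>2 + sin (real (Suc i) * psi N) * sin (real (Suc (Suc i)) * psi N))
      / (real N * sin (psi N / 2)))"
    using row_val[OF N nc] by simp
  also have "\<dots> = ((\<Sum>i<n. (sin (real (Suc i) * psi N))\<^sup>2) + (\<Sum>i<n. sin (real (Suc i) * psi N) * sin (real (Suc (Suc i)) * psi N)))
      / (real N * sin (psi N / 2))"
    by (simp add: sum_divide_distrib[symmetric] sum.distrib)
  also have "\<dots> = (real N / 2 + real N * cos (psi N) / 2) / (real N * sin (psi N / 2))"
    unfolding T1[OF N] T2[OF N] ..
  finally show ?thesis .
qed

lemma xiv_norm: assumes N: "N = Suc n" "n \<ge> 1"
  shows "vec_norm n (xiv N) = sqrt (real N * cos (psi N / 2) / 2)"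
proof -
  have "vec_norm n (xiv N) = sqrt (\<Sum>i<n. ww N (Suc i))"
    unfolding vec_norm_def xiv_def using ww_nonneg N
    by (intro arg_cong[where f = sqrt] sum.cong refl) (simp add: power_mult_distrib)
  then show ?thesis using T3[OF N] by simp
qed

lemma etav_norm: assumes N: "N = Suc n" "n \<ge> 1" and nc: "n \<le> nc"
  shows "vec_norm nc (etav N) = sqrt (real N * cos (psi N / 2) / 2)"
proof -
  have "vec_norm nc (etav N) = sqrt (\<Sum>j<n. (norm (etav N j))\<^sup>2)"
    unfolding vec_norm_def using nc
    by (intro arg_cong[where f = sqrt] sum.mono_neutral_right) (auto simp: etav_def N)
  also have "\<dots> = sqrt (\<Sum>i<n. vv N (Suc i))"
    unfolding etav_def using vv_pos[of _ N] N
    by (intro arg_cong[where f = sqrt] sum.cong refl) (auto simp: power_mult_distrib less_imp_le)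
  finally show ?thesis using T4[OF N] by simp
qed


lemma upper_pt:
  assumes "nc \<le> Suc n" and X: "op_norm n nc X \<le> 1"
  shows "op_norm n nc (schur_prod (Sigma_mat :: nat \<Rightarrow> nat \<Rightarrow> 'a::real_normed_field) X) \<le> cval (Suc n)"
proof (rule op_norm_le)
  fix x :: "nat \<Rightarrow> 'a" assume x: "vec_norm nc x \<le> 1"
  have c0: "0 \<le> cval (Suc n)" by (rule cval_nonneg)
  have "vec_norm n (mat_apply nc (schur_prod Sigma_mat X) x)
      \<le> sqrt (cval (Suc n)) * sqrt (cval (Suc n)) * op_norm n nc X * vec_norm nc x"
  proof (rule schur_factor_bound[where P = "{..<Suc n} \<times> UNIV" and a = "fa (Suc n)" and b = "fb (Suc n)"])
    show "finite ({..<Suc n} \<times> (UNIV::bool set))" by simp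
    fix i j assume "i < n" "j < nc"
    then show "Sigma_mat i j = of_real (\<Sum>p\<in>{..<Suc n} \<times> UNIV. fa (Suc n) p i * fb (Suc n) p j)"
      using assms by (simp add: fab_sigma Sigma_mat_def)
  next
    fix i show "(\<Sum>p\<in>{..<Suc n} \<times> UNIV. (fa (Suc n) p i)\<^sup>2) \<le> cval (Suc n)" by (simp add: fa_sq)
  next
    fix j show "(\<Sum>p\<in>{..<Suc n} \<times> UNIV. (fb (Suc n) p j)\<^sup>2) \<le> cval (Suc n)" by (simp add: fb_sq)
  qed (use c0 in auto)
  also have "\<dots> \<le> cval (Suc n) * 1 * 1"
    using c0 X x op_norm_nonneg[of n nc X] vec_norm_nonneg[of nc x]
    by (intro mult_mono) auto
  finally show "vec_norm n (mat_apply nc (schur_prod Sigma_mat X) x) \<le> cval (Suc n)" by simp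
qed

lemma lower_op:
  assumes N: "N = Suc n" "n \<ge> 1" and nc: "n \<le> nc" "nc \<le> Suc n"
  shows "cval N \<le> op_norm n nc (schur_prod (Sigma_mat :: nat \<Rightarrow> nat \<Rightarrow> 'a::real_normed_field) (\<lambda>i j. of_real (X0 N i j)))"
proof -
  define op where "op = op_norm n nc (schur_prod (Sigma_mat :: nat \<Rightarrow> nat \<Rightarrow> 'a) (\<lambda>i j. of_real (X0 N i j)))"
  define c where "c = cos (psi N / 2)"
  define s where "s = sin (psi N / 2)"
  have N0: "N > 0" using N by simp
  have s0: "s > 0" unfolding s_def using sin_pos_lt[of "1/2" N] N0 by simp
  have c0: "c > 0" unfolding c_def psi_def using N0 N
    by (intro cos_gt_zero) (auto simp: field_simps)
  have cd: "cos (psi N) = 2 * c\<^sup>2 - 1" unfolding c_def using cos_double_cos[of "psi N / 2"] by simp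
  have "(real N / 2 + real N * cos (psi N) / 2) / (real N * sin (psi N / 2))
      \<le> vec_norm n (xiv N) * op * vec_norm nc (etav N)"
    unfolding op_def by (rule lower_gen[OF pairing[OF N nc]])
  also have "vec_norm n (xiv N) * op * vec_norm nc (etav N) = (real N * c / 2) * op"
    unfolding xiv_norm[OF N] etav_norm[OF N nc(1)] c_def[symmetric] using c0 N0
    by (simp add: mult_ac)
  also have "(real N / 2 + real N * cos (psi N) / 2) / (real N * sin (psi N / 2)) = c\<^sup>2 / s"
    unfolding cd s_def[symmetric] using N0 s0 by (simp add: field_simps)
  finally have ineq: "c\<^sup>2 / s \<le> real N * c / 2 * op" .
  have "cval N = 2 * c / (real N * s)"
    unfolding cval_def cot_def c_def s_def psi_def by (simp add: field_simps)
  also have "\<dots> \<le> op"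
  proof -
    have "2 * c / (real N * s) = (c\<^sup>2 / s) / (real N * c / 2)" using c0 s0 N0 by (simp add: field_simps power2_eq_square)
    also have "\<dots> \<le> op"
    proof -
      have p: "0 < real N * c / 2" using c0 N0 by simp
      show ?thesis unfolding pos_divide_le_eq[OF p] using ineq by (simp add: mult.commute)
    qed
    finally show ?thesis .
  qed
  finally show ?thesis unfolding op_def .
qed

lemma cval_1: "cval (Suc 0) = 0"
  unfolding cval_def cot_def by simp

lemma final_gen:
  assumes nc: "n \<le> nc" "nc \<le> Suc n"
    and Xle: "n \<ge> 1 \<Longrightarrow> op_norm n nc (\<lambda>i j. (of_real (X0 (Suc n) i j) :: 'a::real_normed_field)) \<le> 1"
  shows "schur_norm n nc (Sigma_mat :: nat \<Rightarrow> nat \<Rightarrow> 'a) = cval (Suc n)"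
proof (rule antisym)
  show "schur_norm n nc (Sigma_mat :: nat \<Rightarrow> nat \<Rightarrow> 'a) \<le> cval (Suc n)"
    by (rule schur_norm_le) (rule upper_pt[OF nc(2)])
next
  have ub: "\<And>X. op_norm n nc X \<le> 1 \<Longrightarrow> op_norm n nc (schur_prod (Sigma_mat :: nat \<Rightarrow> nat \<Rightarrow> 'a) X) \<le> cval (Suc n)"
    by (rule upper_pt[OF nc(2)])
  show "cval (Suc n) \<le> schur_norm n nc (Sigma_mat :: nat \<Rightarrow> nat \<Rightarrow> 'a)"
  proof (cases "n = 0")
    case True
    have z: "op_norm n nc (\<lambda>i j. 0 :: 'a) \<le> 1" by (rule op_norm_le) (simp add: mat_apply_def vec_norm_def)
    have "cval (Suc n) \<le> op_norm n nc (schur_prod (Sigma_mat :: nat \<Rightarrow> nat \<Rightarrow> 'a) (\<lambda>i j. 0))"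
      using True cval_1 op_norm_nonneg by simp
    also have "\<dots> \<le> schur_norm n nc (Sigma_mat :: nat \<Rightarrow> nat \<Rightarrow> 'a)" by (rule schur_norm_ge[OF ub z])
    finally show ?thesis .
  next
    case False
    then have n1: "n \<ge> 1" by simp
    have "cval (Suc n) \<le> op_norm n nc (schur_prod (Sigma_mat :: nat \<Rightarrow> nat \<Rightarrow> 'a) (\<lambda>i j. of_real (X0 (Suc n) i j)))"
      by (rule lower_op[OF refl n1 nc])
    also have "\<dots> \<le> schur_norm n nc (Sigma_mat :: nat \<Rightarrow> nat \<Rightarrow> 'a)" by (rule schur_norm_ge[OF ub Xle[OF n1]])
    finally show ?thesis .
  qed
qed

lemma final_real: assumes "n \<le> nc" "nc \<le> Suc n"
  shows "schur_norm n nc (Sigma_mat :: nat \<Rightarrow> nat \<Rightarrow> real) = cval (Suc n)"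
  using assms by (intro final_gen) (use X0_op_real[OF refl _ assms(1)] in simp_all)

lemma final_complex: assumes "n \<le> nc" "nc \<le> Suc n"
  shows "schur_norm n nc (Sigma_mat :: nat \<Rightarrow> nat \<Rightarrow> complex) = cval (Suc n)"
  using assms by (intro final_gen) (use X0_op_complex[OF refl _ assms(1)] in simp_all)

theorem theorem4p2:
  fixes n :: nat
  shows "schur_norm n n (Sigma_mat :: nat \<Rightarrow> nat \<Rightarrow> real) = 2 / (n + 1) * cot (pi / (2 * (n + 1)))
       \<and> schur_norm n (n + 1) (Sigma_mat :: nat \<Rightarrow> nat \<Rightarrow> real) = 2 / (n + 1) * cot (pi / (2 * (n + 1)))
       \<and> schur_norm n n (Sigma_mat :: nat \<Rightarrow> nat \<Rightarrow> complex) = 2 / (n + 1) * cot (pi / (2 * (n + 1)))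
       \<and> schur_norm n (n + 1) (Sigma_mat :: nat \<Rightarrow> nat \<Rightarrow> complex) = 2 / (n + 1) * cot (pi / (2 * (n + 1)))"
proof -
  have c: "cval (Suc n) = 2 / (n + 1) * cot (pi / (2 * (n + 1)))" unfolding cval_def by simp
  show ?thesis using final_real[of n n] final_real[of n "n+1"] final_complex[of n n] final_complex[of n "n+1"]
    unfolding c by simp
qed


end
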